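(* Fix $\lambda>0$ and suppose some kernel $P_{Y^*|X}$ attains the infimum $F(\lambda)=\inf_{P_{Y|X}}\{I(X;Y)+\lambda\mathbb E[\mathsf d(X,Y)]\}$, with output distribution $P_{Y^*}$. Let $P_{Y_0}$ satisfy $D(P_{Y^*}\|P_{Y_0})<\infty$ and run the generalized Blahut iteration from $P_{Y_0}$. Then $(F_k(\lambda))_{k\ge1}$ is non-increasing, converges to $F(\lambda)$, and for every $k\ge1$ $$F_k(\lambda)-F(\lambda)\le\frac{D(P_{Y^*}\|P_{Y_0})}{k}.$$
   Context: $X$ has law $P_X$ on a measurable space $\mathcal X$; $\mathsf d\colon\mathcal X\times\mathcal Y\to[0,\infty)$ is a measurable distortion measure (all $\sigma$-algebras containing singletons). Generalized Blahut iteration: given a probability measure $P_{Y_0}$ on $\mathcal Y$, for $k=1,2,\dots$ set $\Sigma_{k-1}(x)=\mathbb E[\exp(-\lambda\mathsf d(x,Y_{k-1}))]$ with $Y_{k-1}\sim P_{Y_{k-1}}$; define the kernel $P_{Y_k|X}$ by $\frac{dP_{Y_k|X=x}}{dP_{Y_{k-1}}}(y)=\frac{\exp(-\lambda\mathsf d(x,y))}{\Sigma_{k-1}(x)}$; this kernel attains $F_k(\lambda)=\min_{P_{Y|X}}\{D(P_{Y|X}\|P_{Y_{k-1}}|P_X)+\lambda\mathbb E[\mathsf d(X,Y)]\}=\mathbb E[\log\frac1{\Sigma_{k-1}(X)}]$; and let $P_{Y_k}$ be the $\mathcal Y$-marginal of $P_XP_{Y_k|X}$. Here $D(P_{Y|X}\|Q|P_X)=\int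 D(P_{Y|X=x}\|Q)\,dP_X(x)$ is conditional relative entropy. Logarithms natural. *)

theory Defs
  imports "HOL-Probability.Probability"
begin

text \<open>Relative entropy D(P||Q) (natural log), valued in extended reals:
  infinite unless P is absolutely continuous w.r.t. Q; otherwise
  the integral of log(dP/dQ) w.r.t. P, split into positive and negative parts
  (the negative part is finite for probability measures).\<close>
definition rel_entropy :: "'b measure \<Rightarrow> 'b measure \<Rightarrow> ereal" where
  "rel_entropy P Q =
     (if sets P = sets Q \<and> absolutely_continuous Q P
      then enn2ereal (\<integral>\<^sup>+ y. ennreal (ln (enn2real (RN_deriv Q P y))) \<partial>P)
         - enn2ereal (\<integral>\<^sup>+ y. ennreal (- ln (enn2real (RN_deriv Q P y))) \<partial>P)
      else \<infinity>)"

definition cond_rel_entropy ::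
  "'a measure \<Rightarrow> ('a \<Rightarrow> 'b measure) \<Rightarrow> 'b measure \<Rightarrow> ereal" where
  "cond_rel_entropy P K Q = enn2ereal (\<integral>\<^sup>+ x. e2ennreal (rel_entropy (K x) Q) \<partial>P)"

definition joint_law :: "'a measure \<Rightarrow> 'b measure \<Rightarrow> ('a \<Rightarrow> 'b measure) \<Rightarrow> ('a \<times> 'b) measure" where
  "joint_law P MY K = bind P (\<lambda>x. distr (K x) (P \<Otimes>\<^sub>M MY) (\<lambda>y. (x, y)))"

definition output_law :: "'a measure \<Rightarrow> ('a \<Rightarrow> 'b measure) \<Rightarrow> 'b measure" where
  "output_law P K = bind P K"

definition mutual_info :: "'a measure \<Rightarrow> 'b measure \<Rightarrow> ('a \<Rightarrow> 'b measure) \<Rightarrow> ereal" where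
  "mutual_info P MY K = rel_entropy (joint_law P MY K) (P \<Otimes>\<^sub>M output_law P K)"

definition exp_distortion :: "'a measure \<Rightarrow> ('a \<Rightarrow> 'b measure) \<Rightarrow> ('a \<Rightarrow> 'b \<Rightarrow> real) \<Rightarrow> ereal" where
  "exp_distortion P K d = enn2ereal (\<integral>\<^sup>+ x. (\<integral>\<^sup>+ y. ennreal (d x y) \<partial>K x) \<partial>P)"

definition rd_F :: "'a measure \<Rightarrow> 'b measure \<Rightarrow> ('a \<Rightarrow> 'b \<Rightarrow> real) \<Rightarrow> real \<Rightarrow> ereal" where
  "rd_F P MY d lam = (INF K \<in> P \<rightarrow>\<^sub>M prob_algebra MY.
       mutual_info P MY K + ereal lam * exp_distortion P K d)"

definition blahut_sigma :: "('a \<Rightarrow> 'b \<Rightarrow> real) \<Rightarrow> real \<Rightarrow> 'b measure \<Rightarrow> 'a \<Rightarrow> real" where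
  "blahut_sigma d lam Q x = (\<integral> y. exp (- lam * d x y) \<partial>Q)"

definition blahut_kernel :: "('a \<Rightarrow> 'b \<Rightarrow> real) \<Rightarrow> real \<Rightarrow> 'b measure \<Rightarrow> 'a \<Rightarrow> 'b measure" where
  "blahut_kernel d lam Q x =
     density Q (\<lambda>y. ennreal (exp (- lam * d x y) / blahut_sigma d lam Q x))"

primrec blahut_out ::
  "'a measure \<Rightarrow> ('a \<Rightarrow> 'b \<Rightarrow> real) \<Rightarrow> real \<Rightarrow> 'b measure \<Rightarrow> nat \<Rightarrow> 'b measure" where
  "blahut_out P d lam Q0 0 = Q0"
| "blahut_out P d lam Q0 (Suc k) = bind P (blahut_kernel d lam (blahut_out P d lam Q0 k))"

definition blahut_F ::
  "'a measure \<Rightarrow> 'b measure \<Rightarrow> ('a \<Rightarrow> 'b \<Rightarrow> real) \<Rightarrow> real \<Rightarrow> 'b measure \<Rightarrow> nat \<Rightarrow> ereal" where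
  "blahut_F P MY d lam Q0 k = (INF K \<in> P \<rightarrow>\<^sub>M prob_algebra MY.
       cond_rel_entropy P K (blahut_out P d lam Q0 (k - 1)) + ereal lam * exp_distortion P K d)"

end

theory Submission
  imports Defs
begin

lemma prob_algebra_prob: "Q \<in> space (prob_algebra M) \<Longrightarrow> prob_space Q"
  by (simp add: space_prob_algebra)
lemma prob_algebra_sets: "Q \<in> space (prob_algebra M) \<Longrightarrow> sets Q = sets M"
  by (simp add: space_prob_algebra)

locale bl =
  fixes P :: "'a measure" and MY :: "'b measure" and d :: "'a \<Rightarrow> 'b \<Rightarrow> real" and lam :: real
  assumes P: "prob_space P"
    and dm: "(\<lambda>(x, y). d x y) \<in> borel_measurable (P \<Otimes>\<^sub>M MY)"
    and dnn: "\<forall>x y. 0 \<le> d x y"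
    and lam: "lam > 0"
begin

lemma P_in: "P \<in> space (prob_algebra P)"
  using P by (simp add: space_prob_algebra)

lemma dQ:
  assumes "sets Q = sets MY"
  shows "(\<lambda>(x, y). d x y) \<in> borel_measurable (P \<Otimes>\<^sub>M Q)"
  using dm by (subst measurable_cong_sets[OF sets_pair_measure_cong[OF refl assms] refl])

lemma dQ':
  assumes "sets Q = sets MY"
  shows "(\<lambda>z. d (fst z) (snd z)) \<in> borel_measurable (P \<Otimes>\<^sub>M Q)"
  using dQ[OF assms] by (simp add: case_prod_beta')

lemma gQ:
  assumes "sets Q = sets MY"
  shows "(\<lambda>(x, y). exp (- lam * d x y)) \<in> borel_measurable (P \<Otimes>\<^sub>M Q)"
  using dQ'[OF assms] by (simp add: case_prod_beta')

lemma d_y: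
  assumes "sets Q = sets MY" "x \<in> space P"
  shows "(\<lambda>y. d x y) \<in> borel_measurable Q"
  using measurable_Pair2[OF dQ[OF assms(1)] assms(2)] by simp

lemma sig_meas:
  assumes Q: "Q \<in> space (prob_algebra MY)"
  shows "blahut_sigma d lam Q \<in> borel_measurable P"
proof -
  interpret Q: prob_space Q using Q by (rule prob_algebra_prob)
  show ?thesis unfolding blahut_sigma_def
    by (rule Q.borel_measurable_lebesgue_integral) (rule gQ[OF prob_algebra_sets[OF Q]])
qed

lemma sig_props:
  assumes Q: "Q \<in> space (prob_algebra MY)" and x: "x \<in> space P"
  shows "0 < blahut_sigma d lam Q x" "blahut_sigma d lam Q x \<le> 1"
    "ennreal (blahut_sigma d lam Q x) = (\<integral>\<^sup>+ y. ennreal (exp (- lam * d x y)) \<partial>Q)"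
proof -
  interpret Q: prob_space Q using Q by (rule prob_algebra_prob)
  have sQ: "sets Q = sets MY" using Q by (rule prob_algebra_sets)
  have m: "(\<lambda>y. exp (- lam * d x y)) \<in> borel_measurable Q"
    using d_y[OF sQ x] by measurable
  have le1: "\<And>y. exp (- lam * d x y) \<le> 1" using dnn lam
    by (simp add: mult_nonneg_nonneg)
  have int: "integrable Q (\<lambda>y. exp (- lam * d x y))"
    by (rule Q.integrable_const_bound[where B=1]) (use m le1 in auto)
  show eq: "ennreal (blahut_sigma d lam Q x) = (\<integral>\<^sup>+ y. ennreal (exp (- lam * d x y)) \<partial>Q)"
    unfolding blahut_sigma_def
    by (rule nn_integral_eq_integral[symmetric]) (use int in auto)
  have "(\<integral>\<^sup>+ y. ennreal (exp (- lam * d x y)) \<partial>Q) \<le> (\<integral>\<^sup>+ y. 1 \<partial>Q)"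
    by (rule nn_integral_mono) (use le1 in auto)
  then have "ennreal (blahut_sigma d lam Q x) \<le> 1" using eq Q.emeasure_space_1 by simp
  then show "blahut_sigma d lam Q x \<le> 1" by (simp add: ennreal_le_1)
  have "(\<integral>\<^sup>+ y. ennreal (exp (- lam * d x y)) \<partial>Q) \<noteq> 0"
  proof
    assume "(\<integral>\<^sup>+ y. ennreal (exp (- lam * d x y)) \<partial>Q) = 0"
    then have "AE y in Q. ennreal (exp (- lam * d x y)) = 0"
      using m by (subst (asm) nn_integral_0_iff_AE) auto
    then have "AE y in Q. False" by simp
    then show False using Q.AE_False by simp
  qed
  then show "0 < blahut_sigma d lam Q x"
    using eq blahut_sigma_def[of d lam Q x] integral_nonneg_AE[of "\<lambda>y. exp (- lam * d x y)" Q]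
    by (metis ennreal_0 exp_ge_zero AE_I2 order_le_less)
qed

definition rho :: "'b measure \<Rightarrow> 'a \<Rightarrow> 'b \<Rightarrow> ennreal" where
  "rho Q x y = ennreal (exp (- lam * d x y) / blahut_sigma d lam Q x)"

definition W :: "'b measure \<Rightarrow> 'b \<Rightarrow> ennreal" where
  "W Q y = (\<integral>\<^sup>+ x. rho Q x y \<partial>P)"

lemma rho_meas:
  assumes Q: "Q \<in> space (prob_algebra MY)"
  shows "(\<lambda>(x, y). rho Q x y) \<in> borel_measurable (P \<Otimes>\<^sub>M Q)"
proof -
  note [measurable] = dQ'[OF prob_algebra_sets[OF Q]] sig_meas[OF Q]
  show ?thesis unfolding rho_def case_prod_beta' by measurable
qed

lemma rho_meas':
  assumes Q: "Q \<in> space (prob_algebra MY)"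
  shows "(\<lambda>(y, x). rho Q x y) \<in> borel_measurable (Q \<Otimes>\<^sub>M P)"
proof -
  have "(\<lambda>z. (\<lambda>(x, y). rho Q x y) (snd z, fst z)) \<in> borel_measurable (Q \<Otimes>\<^sub>M P)"
    using rho_meas[OF Q] by measurable
  then show ?thesis by (simp add: case_prod_beta')
qed

lemma rho_int:
  assumes Q: "Q \<in> space (prob_algebra MY)" and x: "x \<in> space P"
  shows "(\<integral>\<^sup>+ y. rho Q x y \<partial>Q) = 1"
proof -
  have sQ: "sets Q = sets MY" using Q by (rule prob_algebra_sets)
  have m: "(\<lambda>y. exp (- lam * d x y)) \<in> borel_measurable Q"
    using d_y[OF sQ x] by measurable
  have s: "0 < blahut_sigma d lam Q x" using sig_props[OF Q x] by simp
  have "(\<integral>\<^sup>+ y. rho Q x y \<partial>Q) = (\<integral>\<^sup>+ y. ennreal (exp (- lam * d x y)) * ennreal (1 / blahut_sigma d lam Q x) \<partial>Q)"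
    unfolding rho_def using s by (intro nn_integral_cong) (simp add: ennreal_mult[symmetric] divide_inverse)
  also have "\<dots> = ennreal (blahut_sigma d lam Q x) * ennreal (1 / blahut_sigma d lam Q x)"
    using m by (subst nn_integral_multc) (auto simp: sig_props[OF Q x])
  also have "\<dots> = 1" using s by (simp add: ennreal_mult[symmetric])
  finally show ?thesis .
qed

lemma kernel_eq: "blahut_kernel d lam Q x = density Q (rho Q x)"
  unfolding blahut_kernel_def rho_def by simp

lemma kernel_prob:
  assumes Q: "Q \<in> space (prob_algebra MY)" and x: "x \<in> space P"
  shows "prob_space (blahut_kernel d lam Q x)" "sets (blahut_kernel d lam Q x) = sets MY"
proof -
  have sQ: "sets Q = sets MY" using Q by (rule prob_algebra_sets)
  have m: "rho Q x \<in> borel_measurable Q"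
    using measurable_Pair2[OF rho_meas[OF Q] x] by simp
  show "sets (blahut_kernel d lam Q x) = sets MY" using sQ by (simp add: kernel_eq)
  show "prob_space (blahut_kernel d lam Q x)" unfolding kernel_eq
    by (rule prob_spaceI) (simp add: emeasure_density[OF m] rho_int[OF Q x])
qed

lemma kernel_meas:
  assumes Q: "Q \<in> space (prob_algebra MY)"
  shows "blahut_kernel d lam Q \<in> P \<rightarrow>\<^sub>M prob_algebra MY"
proof (rule measurable_prob_algebraI)
  show "\<And>x. x \<in> space P \<Longrightarrow> prob_space (blahut_kernel d lam Q x)" using kernel_prob[OF Q] by simp
  interpret Q: prob_space Q using Q by (rule prob_algebra_prob)
  have sQ: "sets Q = sets MY" using Q by (rule prob_algebra_sets)
  show "blahut_kernel d lam Q \<in> P \<rightarrow>\<^sub>M subprob_algebra MY"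
  proof (rule measurable_subprob_algebra)
    fix x assume "x \<in> space P" then show "subprob_space (blahut_kernel d lam Q x)"
      "sets (blahut_kernel d lam Q x) = sets MY"
      using kernel_prob[OF Q] prob_space_imp_subprob_space by auto
  next
    fix A assume A: "A \<in> sets MY"
    have "(\<lambda>x. \<integral>\<^sup>+ y. rho Q x y * indicator A y \<partial>Q) \<in> borel_measurable P"
    proof (rule Q.borel_measurable_nn_integral)
      note [measurable] = rho_meas[OF Q]
      have [measurable]: "A \<in> sets Q" using A sQ by simp
      show "(\<lambda>(x, y). rho Q x y * indicator A y) \<in> borel_measurable (P \<Otimes>\<^sub>M Q)"
        unfolding case_prod_beta' by measurable
    qed
    then show "(\<lambda>x. emeasure (blahut_kernel d lam Q x) A) \<in> borel_measurable P"
    proof (rule measurable_cong[THEN iffD1, rotated])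
      fix x assume x: "x \<in> space P"
      have m: "rho Q x \<in> borel_measurable Q"
        using measurable_Pair2[OF rho_meas[OF Q] x] by simp
      show "(\<integral>\<^sup>+ y. rho Q x y * indicator A y \<partial>Q) = emeasure (blahut_kernel d lam Q x) A"
        unfolding kernel_eq using A sQ by (simp add: emeasure_density[OF m])
    qed
  qed
qed

lemma W_meas:
  assumes Q: "Q \<in> space (prob_algebra MY)"
  shows "W Q \<in> borel_measurable Q"
proof -
  interpret P: prob_space P by (rule P)
  show ?thesis unfolding W_def by (rule P.borel_measurable_nn_integral) (rule rho_meas'[OF Q])
qed

lemma out_density:
  assumes Q: "Q \<in> space (prob_algebra MY)"
  shows "bind P (blahut_kernel d lam Q) = density Q (W Q)"
proof (rule measure_eqI)
  interpret Q: prob_space Q using Q by (rule prob_algebra_prob)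
  interpret P: prob_space P by (rule P)
  interpret PQ: pair_prob_space P Q ..
  have sQ: "sets Q = sets MY" using Q by (rule prob_algebra_sets)
  show "sets (bind P (blahut_kernel d lam Q)) = sets (density Q (W Q))"
    using sets_bind'[OF P_in kernel_meas[OF Q]] sQ by simp
  fix A assume "A \<in> sets (bind P (blahut_kernel d lam Q))"
  then have A: "A \<in> sets MY" using sets_bind'[OF P_in kernel_meas[OF Q]] by simp
  have "emeasure (bind P (blahut_kernel d lam Q)) A = (\<integral>\<^sup>+ x. emeasure (blahut_kernel d lam Q x) A \<partial>P)"
    by (rule emeasure_bind_prob_algebra[OF P_in kernel_meas[OF Q] A])
  also have "\<dots> = (\<integral>\<^sup>+ x. \<integral>\<^sup>+ y. rho Q x y * indicator A y \<partial>Q \<partial>P)"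
  proof (rule nn_integral_cong)
    fix x assume x: "x \<in> space P"
    have m: "rho Q x \<in> borel_measurable Q"
      using measurable_Pair2[OF rho_meas[OF Q] x] by simp
    show "emeasure (blahut_kernel d lam Q x) A = (\<integral>\<^sup>+ y. rho Q x y * indicator A y \<partial>Q)"
      unfolding kernel_eq using A sQ by (simp add: emeasure_density[OF m])
  qed
  also have "\<dots> = (\<integral>\<^sup>+ y. \<integral>\<^sup>+ x. rho Q x y * indicator A y \<partial>P \<partial>Q)"
  proof (rule PQ.Fubini'[symmetric])
    note [measurable] = rho_meas[OF Q]
    have [measurable]: "A \<in> sets Q" using A sQ by simp
    show "(\<lambda>(x, y). rho Q x y * indicator A y) \<in> borel_measurable (P \<Otimes>\<^sub>M Q)"
      unfolding case_prod_beta' by measurable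
  qed
  also have "\<dots> = (\<integral>\<^sup>+ y. W Q y * indicator A y \<partial>Q)"
  proof (rule nn_integral_cong)
    fix y assume y: "y \<in> space Q"
    have m: "(\<lambda>x. rho Q x y) \<in> borel_measurable P"
      using measurable_Pair2[OF rho_meas'[OF Q] y] by simp
    show "(\<integral>\<^sup>+ x. rho Q x y * indicator A y \<partial>P) = W Q y * indicator A y"
      unfolding W_def by (rule nn_integral_multc[OF m])
  qed
  also have "\<dots> = emeasure (density Q (W Q)) A"
    using A sQ by (simp add: emeasure_density[OF W_meas[OF Q]])
  finally show "emeasure (bind P (blahut_kernel d lam Q)) A = emeasure (density Q (W Q)) A" .
qed

lemma out_in:
  assumes Q: "Q \<in> space (prob_algebra MY)"
  shows "bind P (blahut_kernel d lam Q) \<in> space (prob_algebra MY)"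
  using prob_space_bind'[OF P_in kernel_meas[OF Q]] sets_bind'[OF P_in kernel_meas[OF Q]]
  by (simp add: space_prob_algebra)

lemma W_pos:
  assumes Q: "Q \<in> space (prob_algebra MY)" and y: "y \<in> space MY"
  shows "0 < W Q y"
proof -
  interpret P: prob_space P by (rule P)
  have sQ: "sets Q = sets MY" using Q by (rule prob_algebra_sets)
  have yQ: "y \<in> space Q" using y sets_eq_imp_space_eq[OF sQ] by simp
  have m: "(\<lambda>x. rho Q x y) \<in> borel_measurable P"
    using measurable_Pair2[OF rho_meas'[OF Q] yQ] by simp
  have "W Q y \<noteq> 0"
  proof
    assume "W Q y = 0"
    then have "AE x in P. rho Q x y = 0"
      unfolding W_def using m by (subst (asm) nn_integral_0_iff_AE) auto
    moreover have "AE x in P. rho Q x y \<noteq> 0"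
    proof (rule AE_I2)
      fix x assume x: "x \<in> space P"
      have "0 < exp (- lam * d x y) / blahut_sigma d lam Q x" using sig_props(1)[OF Q x] by simp
      then show "rho Q x y \<noteq> 0" unfolding rho_def using sig_props(1)[OF Q x] by simp
    qed
    ultimately have "AE x in P. False" by eventually_elim simp
    then show False using P.AE_False by simp
  qed
  then show ?thesis by (simp add: zero_less_iff_neq_zero)
qed

lemma W_int:
  assumes Q: "Q \<in> space (prob_algebra MY)"
  shows "(\<integral>\<^sup>+ y. W Q y \<partial>Q) = 1"
proof -
  have "emeasure (density Q (W Q)) (space Q) = 1"
    using out_density[OF Q] prob_space.emeasure_space_1[OF prob_space_bind'[OF P_in kernel_meas[OF Q]]]
      sets_eq_imp_space_eq[OF sets_bind'[OF P_in kernel_meas[OF Q]]]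
      sets_eq_imp_space_eq[OF prob_algebra_sets[OF Q]]
    by simp
  then show ?thesis by (simp add: emeasure_density[OF W_meas[OF Q]])
qed

lemma W_fin:
  assumes Q: "Q \<in> space (prob_algebra MY)"
  shows "AE y in Q. W Q y < \<infinity>"
proof -
  have "(\<integral>\<^sup>+ y. W Q y \<partial>Q) \<noteq> \<infinity>" using W_int[OF Q] by simp
  then show ?thesis using nn_integral_PInf_AE[OF W_meas[OF Q]] by (simp add: less_top)
qed

end

lemma ennreal_max0: "ennreal x = ennreal (max x 0)"
  by (cases "x \<ge> 0") (auto simp: max_def ennreal_neg)

lemma ennreal_sum2_le:
  assumes "max c 0 + max e 0 \<le> max a 0 + max b 0"
  shows "ennreal c + ennreal e \<le> ennreal a + ennreal b"
proof -
  have "ennreal c + ennreal e = ennreal (max c 0 + max e 0)"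
    by (subst ennreal_plus) (auto simp: ennreal_max0[symmetric])
  also have "\<dots> \<le> ennreal (max a 0 + max b 0)" using assms by (rule ennreal_leI)
  also have "\<dots> = ennreal a + ennreal b"
    by (subst ennreal_plus) (auto simp: ennreal_max0[symmetric])
  finally show ?thesis .
qed

lemma neg_ln_le: "0 < (t::real) \<Longrightarrow> - ln t \<le> 1 / t - 1"
  using ln_le_minus_one[of "1/t"] by (simp add: ln_div)

lemma t_neg_ln_le1: "0 \<le> (t::real) \<Longrightarrow> t * max (- ln t) 0 \<le> 1"
proof (cases "t = 0")
  case False
  assume t: "0 \<le> t"
  then have t': "0 < t" using False by (simp add: order_le_less)
  have "t * (- ln t) \<le> t * (1 / t - 1)"
    using neg_ln_le[OF t'] t' by (intro mult_left_mono) auto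
  also have "\<dots> = 1 - t" using t' by (simp add: field_simps)
  finally show ?thesis using t by (auto simp: max_def)
qed simp

lemma rel_entropy_density:
  assumes M: "prob_space M" and f: "f \<in> borel_measurable M"
  shows "rel_entropy (density M f) M =
     enn2ereal (\<integral>\<^sup>+ y. ennreal (ln (enn2real (f y))) \<partial>density M f)
   - enn2ereal (\<integral>\<^sup>+ y. ennreal (- ln (enn2real (f y))) \<partial>density M f)"
proof -
  interpret M: prob_space M by (rule M)
  have ae: "AE y in M. f y = RN_deriv M (density M f) y"
    by (rule M.RN_deriv_unique[OF f refl])
  then have ae': "AE y in density M f. f y = RN_deriv M (density M f) y"
    using f by (subst AE_density) (auto elim: AE_mp)
  have ac: "absolutely_continuous M (density M f)" by (rule absolutely_continuousI_density[OF f])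
  show ?thesis unfolding rel_entropy_def using ac
    by (simp, intro arg_cong2[where f="(-)"] arg_cong[where f=enn2ereal] nn_integral_cong_AE)
       (use ae' in \<open>auto elim: AE_mp\<close>)
qed

lemma neg_part_le1:
  assumes M: "prob_space M" and f: "f \<in> borel_measurable M"
  shows "(\<integral>\<^sup>+ y. ennreal (- ln (enn2real (f y))) \<partial>density M f) \<le> 1"
proof -
  interpret M: prob_space M by (rule M)
  have "(\<integral>\<^sup>+ y. ennreal (- ln (enn2real (f y))) \<partial>density M f)
      = (\<integral>\<^sup>+ y. f y * ennreal (- ln (enn2real (f y))) \<partial>M)"
    using f by (subst nn_integral_density) auto
  also have "\<dots> \<le> (\<integral>\<^sup>+ y. 1 \<partial>M)"
  proof (rule nn_integral_mono)
    fix y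
    show "f y * ennreal (- ln (enn2real (f y))) \<le> 1"
    proof (cases "f y")
      case (real t)
      then have "f y * ennreal (- ln (enn2real (f y))) = ennreal (t * max (- ln t) 0)"
        by (subst ennreal_max0) (simp add: ennreal_mult)
      also have "\<dots> \<le> 1" using t_neg_ln_le1[of t] real by (simp add: ennreal_le_1)
      finally show ?thesis .
    qed simp
  qed
  finally show ?thesis using M.emeasure_space_1 by simp
qed

lemma gibbs_core:
  assumes M: "prob_space M" and f: "f \<in> borel_measurable M"
    and N: "prob_space (density M f)"
    and phi: "phi \<in> borel_measurable M" "\<And>y. 0 \<le> phi y" "(\<integral>\<^sup>+ y. ennreal (phi y) \<partial>M) \<le> 1"
    and a: "a \<in> borel_measurable M" and b: "b \<in> borel_measurable M"
    and ae: "AE y in density M f. b y + 1 \<le> a y + ennreal (phi y / enn2real (f y))"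
  shows "(\<integral>\<^sup>+ y. b y \<partial>density M f) \<le> (\<integral>\<^sup>+ y. a y \<partial>density M f)"
proof -
  interpret N: prob_space "density M f" by (rule N)
  have u: "(\<integral>\<^sup>+ y. ennreal (phi y / enn2real (f y)) \<partial>density M f) \<le> 1"
  proof -
    have "(\<integral>\<^sup>+ y. ennreal (phi y / enn2real (f y)) \<partial>density M f)
        = (\<integral>\<^sup>+ y. f y * ennreal (phi y / enn2real (f y)) \<partial>M)"
      using f phi by (subst nn_integral_density) auto
    also have "\<dots> \<le> (\<integral>\<^sup>+ y. ennreal (phi y) \<partial>M)"
    proof (rule nn_integral_mono)
      fix y
      show "f y * ennreal (phi y / enn2real (f y)) \<le> ennreal (phi y)"
      proof (cases "f y")
        case (real t)
        then show ?thesis using phi(2)[of y]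
          by (cases "t = 0") (auto simp: ennreal_mult[symmetric])
      qed simp
    qed
    finally show ?thesis using phi(3) by simp
  qed
  have "(\<integral>\<^sup>+ y. b y \<partial>density M f) + 1 = (\<integral>\<^sup>+ y. b y + 1 \<partial>density M f)"
    using b N.emeasure_space_1 by (subst nn_integral_add) auto
  also have "\<dots> \<le> (\<integral>\<^sup>+ y. a y + ennreal (phi y / enn2real (f y)) \<partial>density M f)"
    by (rule nn_integral_mono_AE[OF ae])
  also have "\<dots> = (\<integral>\<^sup>+ y. a y \<partial>density M f) + (\<integral>\<^sup>+ y. ennreal (phi y / enn2real (f y)) \<partial>density M f)"
    using a f phi by (subst nn_integral_add) auto
  also have "\<dots> \<le> (\<integral>\<^sup>+ y. a y \<partial>density M f) + 1"
    using u by (rule add_left_mono)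
  finally show ?thesis using ennreal_add_left_cancel_le[of 1] by (simp add: add.commute)
qed

lemma ae_pos_fin:
  assumes M: "prob_space M" and f: "f \<in> borel_measurable M" and N: "prob_space (density M f)"
  shows "AE y in density M f. 0 < enn2real (f y)"
proof -
  interpret M: prob_space M by (rule M)
  interpret N: prob_space "density M f" by (rule N)
  have "(\<integral>\<^sup>+ y. f y \<partial>M) = 1"
    using N.emeasure_space_1 f by (simp add: emeasure_density)
  then have fin: "AE y in M. f y \<noteq> \<infinity>" using nn_integral_PInf_AE[OF f] by simp
  show ?thesis using f
  proof (subst AE_density)
    show "AE y in M. 0 < f y \<longrightarrow> 0 < enn2real (f y)"
      using fin by eventually_elim (auto simp: enn2real_positive_iff less_top)
  qed
qed

lemma rel_nonneg:
  assumes M: "prob_space M" and f: "f \<in> borel_measurable M" and N: "prob_space (density M f)"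
  shows "(\<integral>\<^sup>+ y. ennreal (- ln (enn2real (f y))) \<partial>density M f) \<le> (\<integral>\<^sup>+ y. ennreal (ln (enn2real (f y))) \<partial>density M f)"
proof (rule gibbs_core[OF M f N, where phi="\<lambda>_. 1"])
  interpret M: prob_space M by (rule M)
  show "(\<integral>\<^sup>+ y. ennreal 1 \<partial>M) \<le> 1" using M.emeasure_space_1 by simp
  show "AE y in density M f. ennreal (- ln (enn2real (f y))) + 1 \<le> ennreal (ln (enn2real (f y))) + ennreal (1 / enn2real (f y))"
    using ae_pos_fin[OF M f N]
  proof (rule AE_mp, intro AE_I2 impI)
    fix y assume t: "0 < enn2real (f y)"
    define t where "t = enn2real (f y)"
    have tp: "0 < t" using t by (simp add: t_def)
    have "max (- ln t) 0 + max 1 0 \<le> max (ln t) 0 + max (1/t) 0"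
      using neg_ln_le[OF tp] tp by (auto simp: max_def)
    then show "ennreal (- ln (enn2real (f y))) + 1 \<le> ennreal (ln (enn2real (f y))) + ennreal (1 / enn2real (f y))"
      using ennreal_sum2_le[of "- ln t" 1 "ln t" "1/t"] by (simp add: t_def)
  qed
qed (use f in auto)

lemma aux1: fixes A B c e :: ennreal shows "B \<noteq> \<infinity> \<Longrightarrow> B + c \<le> A + e \<Longrightarrow> c \<le> (A - B) + e"
  apply (cases A; cases B; cases c; cases e)
  apply (auto simp: ennreal_minus ennreal_plus[symmetric] simp del: ennreal_plus)
  subgoal for r ra rb rc
    using ennreal_sum2_le[of rb 0 "r - ra" rc] by (auto simp: max_def split: if_splits)
  subgoal by (simp add: top_unique)
  done

lemma aux3: fixes A B c e :: ennreal shows "B \<noteq> \<infinity> \<Longrightarrow> B \<le> A \<Longrightarrow> A + e = B + c \<Longrightarrow> (A - B) + e = c"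
  apply (cases A; cases B; cases c; cases e)
  apply (auto simp: ennreal_minus ennreal_plus[symmetric] simp del: ennreal_plus)
  done

lemma aux_minus: "(a::ennreal) \<le> b + c \<Longrightarrow> a \<noteq> \<infinity> \<Longrightarrow> a - c \<le> b"
  by (simp add: ennreal_minus_le_iff add.commute)

lemma ereal_conv: "0 \<le> lam \<Longrightarrow> enn2ereal a + ereal lam * enn2ereal b = enn2ereal (a + ennreal lam * b)"
  by (simp add: plus_ennreal.rep_eq times_ennreal.rep_eq enn2ereal_ennreal)

lemma ennreal_sum3_le:
  assumes "max c1 0 + max c2 0 + max c3 0 \<le> max a1 0 + max a2 0 + max a3 0"
  shows "ennreal c1 + ennreal c2 + ennreal c3 \<le> ennreal a1 + ennreal a2 + ennreal a3"
proof -
  have "ennreal c1 + ennreal c2 + ennreal c3 = ennreal (max c1 0 + max c2 0 + max c3 0)"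
    by (subst ennreal_plus; simp)+
  also have "\<dots> \<le> ennreal (max a1 0 + max a2 0 + max a3 0)" using assms by (rule ennreal_leI)
  also have "\<dots> = ennreal a1 + ennreal a2 + ennreal a3"
    by (subst ennreal_plus; simp)+
  finally show ?thesis .
qed

context bl
begin

definition Phi :: "'b measure \<Rightarrow> ennreal" where
  "Phi Q = (\<integral>\<^sup>+ x. ennreal (- ln (blahut_sigma d lam Q x)) \<partial>P)"

lemma G2x:
  assumes Q: "Q \<in> space (prob_algebra MY)" and x: "x \<in> space P"
    and K: "prob_space Kx" "sets Kx = sets MY"
  shows "ennreal (- ln (blahut_sigma d lam Q x))
     \<le> e2ennreal (rel_entropy Kx Q) + ennreal lam * (\<integral>\<^sup>+ y. ennreal (d x y) \<partial>Kx)"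
proof (cases "absolutely_continuous Q Kx")
  case False
  then show ?thesis using K Q by (simp add: rel_entropy_def space_prob_algebra)
next
  case ac: True
  interpret Q: prob_space Q using Q by (rule prob_algebra_prob)
  have sQ: "sets Q = sets MY" using Q by (rule prob_algebra_sets)
  define f where "f = RN_deriv Q Kx"
  have fm[measurable]: "f \<in> borel_measurable Q" unfolding f_def by simp
  have Kd: "Kx = density Q f" unfolding f_def
    using Q.density_RN_deriv[OF ac] K sQ by simp
  have N: "prob_space (density Q f)" using K Kd by simp
  have dm[measurable]: "(\<lambda>y. d x y) \<in> borel_measurable Q" by (rule d_y[OF sQ x])
  define S where "S = blahut_sigma d lam Q x"
  have S: "0 < S" "S \<le> 1" using sig_props[OF Q x] by (auto simp: S_def)
  define c where "c = - ln S"
  have c0: "0 \<le> c" using S by (simp add: c_def)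
  define A where "A = (\<integral>\<^sup>+ y. ennreal (ln (enn2real (f y))) \<partial>density Q f)"
  define B where "B = (\<integral>\<^sup>+ y. ennreal (- ln (enn2real (f y))) \<partial>density Q f)"
  define e where "e = (\<integral>\<^sup>+ y. ennreal (d x y) \<partial>density Q f)"
  have B1: "B \<le> 1" unfolding B_def by (rule neg_part_le1[OF Q.prob_space_axioms fm])
  have rel: "rel_entropy Kx Q = enn2ereal A - enn2ereal B"
    unfolding Kd A_def B_def by (rule rel_entropy_density[OF Q.prob_space_axioms fm])
  have core: "(\<integral>\<^sup>+ y. ennreal (- ln (enn2real (f y))) + ennreal c \<partial>density Q f)
      \<le> (\<integral>\<^sup>+ y. ennreal (ln (enn2real (f y))) + ennreal (lam * d x y) \<partial>density Q f)"
  proof (rule gibbs_core[OF Q.prob_space_axioms fm N, where phi="\<lambda>y. exp (- lam * d x y) / S"])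
    show "(\<integral>\<^sup>+ y. ennreal (exp (- lam * d x y) / S) \<partial>Q) \<le> 1"
      using rho_int[OF Q x] by (simp add: rho_def S_def)
    show "AE y in density Q f. ennreal (- ln (enn2real (f y))) + ennreal c + 1
        \<le> ennreal (ln (enn2real (f y))) + ennreal (lam * d x y) +
           ennreal (exp (- lam * d x y) / S / enn2real (f y))"
      using ae_pos_fin[OF Q.prob_space_axioms fm N]
    proof (rule AE_mp, intro AE_I2 impI)
      fix y assume tp: "0 < enn2real (f y)"
      define t where "t = enn2real (f y)"
      have t: "0 < t" using tp by (simp add: t_def)
      define u where "u = exp (- lam * d x y) / S / t"
      have u: "0 < u" using t S by (simp add: u_def)
      have lnu: "ln u = - lam * d x y + c - ln t"
        using t S by (simp add: u_def c_def ln_div ln_mult)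
      have "- ln u \<le> 1 / u - 1" by (rule neg_ln_le[OF u])
      have "1 - u \<le> - ln u" using ln_le_minus_one[OF u] by simp
      then have "max (- ln t) 0 + max c 0 + max 1 0 \<le> max (ln t) 0 + max (lam * d x y) 0 + max u 0"
        using lnu c0 u lam dnn by (auto simp: max_def)
      then show "ennreal (- ln (enn2real (f y))) + ennreal c + 1
        \<le> ennreal (ln (enn2real (f y))) + ennreal (lam * d x y) +
           ennreal (exp (- lam * d x y) / S / enn2real (f y))"
        using ennreal_sum3_le[of "- ln t" c 1 "ln t" "lam * d x y" u] by (simp add: t_def u_def)
    qed
  qed (use S in auto)
  have lhs: "(\<integral>\<^sup>+ y. ennreal (- ln (enn2real (f y))) + ennreal c \<partial>density Q f) = B + ennreal c"
    unfolding B_def using prob_space.emeasure_space_1[OF N]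
    by (subst nn_integral_add) auto
  have rhs: "(\<integral>\<^sup>+ y. ennreal (ln (enn2real (f y))) + ennreal (lam * d x y) \<partial>density Q f) = A + ennreal lam * e"
    unfolding A_def e_def using lam dnn
    by (subst nn_integral_add) (auto simp: ennreal_mult nn_integral_cmult)
  have "ennreal c \<le> (A - B) + ennreal lam * e"
    by (rule aux1) (use B1 core lhs rhs in \<open>auto simp: top_unique\<close>)
  then show ?thesis using rel Kd by (simp add: e2eenreal_enn2ereal_diff c_def S_def e_def)
qed

lemma E_meas:
  assumes K: "K \<in> P \<rightarrow>\<^sub>M prob_algebra MY"
  shows "(\<lambda>x. \<integral>\<^sup>+ y. ennreal (d x y) \<partial>K x) \<in> borel_measurable P"
proof (rule nn_integral_measurable_subprob_algebra2[OF _ measurable_prob_algebraD[OF K]])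
  show "(\<lambda>(x, y). ennreal (d x y)) \<in> borel_measurable (P \<Otimes>\<^sub>M MY)"
    using dm by (simp add: case_prod_beta')
qed

lemma C_meas:
  assumes Q: "Q \<in> space (prob_algebra MY)"
  shows "(\<lambda>x. ennreal (- ln (blahut_sigma d lam Q x))) \<in> borel_measurable P"
  using sig_meas[OF Q] by measurable

lemma G2:
  assumes Q: "Q \<in> space (prob_algebra MY)" and K: "K \<in> P \<rightarrow>\<^sub>M prob_algebra MY"
  shows "enn2ereal (Phi Q) \<le> cond_rel_entropy P K Q + ereal lam * exp_distortion P K d"
proof -
  define C where "C x = ennreal (- ln (blahut_sigma d lam Q x))" for x
  define E where "E x = (\<integral>\<^sup>+ y. ennreal (d x y) \<partial>K x)" for x
  define R where "R x = e2ennreal (rel_entropy (K x) Q)" for x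
  have Cm: "C \<in> borel_measurable P" unfolding C_def by (rule C_meas[OF Q])
  have Em: "E \<in> borel_measurable P" unfolding E_def by (rule E_meas[OF K])
  have pw: "C x \<le> R x + ennreal lam * E x" if x: "x \<in> space P" for x
  proof -
    have "K x \<in> space (prob_algebra MY)" using measurable_space[OF K x] .
    then show ?thesis unfolding C_def R_def E_def
      by (intro G2x[OF Q x]) (auto simp: space_prob_algebra)
  qed
  have "Phi Q = (\<integral>\<^sup>+ x. C x \<partial>P)" unfolding Phi_def C_def ..
  also have "\<dots> \<le> (\<integral>\<^sup>+ x. (C x - ennreal lam * E x) + ennreal lam * E x \<partial>P)"
    by (intro nn_integral_mono) (metis add.commute ennreal_minus_le_iff le_iff_add linear order_refl)
  also have "\<dots> = (\<integral>\<^sup>+ x. C x - ennreal lam * E x \<partial>P) + ennreal lam * (\<integral>\<^sup>+ x. E x \<partial>P)"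
    using Cm Em by (subst nn_integral_add) (auto simp: nn_integral_cmult)
  also have "\<dots> \<le> (\<integral>\<^sup>+ x. R x \<partial>P) + ennreal lam * (\<integral>\<^sup>+ x. E x \<partial>P)"
    by (intro add_right_mono nn_integral_mono aux_minus pw) (simp_all add: C_def)
  finally have "Phi Q \<le> (\<integral>\<^sup>+ x. R x \<partial>P) + ennreal lam * (\<integral>\<^sup>+ x. E x \<partial>P)" .
  then show ?thesis
    unfolding cond_rel_entropy_def exp_distortion_def using lam
    by (simp add: ereal_conv R_def E_def less_eq_ennreal.rep_eq[symmetric])
qed

lemma G3x:
  assumes Q: "Q \<in> space (prob_algebra MY)" and x: "x \<in> space P"
  shows "e2ennreal (rel_entropy (blahut_kernel d lam Q x) Q)
     + ennreal lam * (\<integral>\<^sup>+ y. ennreal (d x y) \<partial>blahut_kernel d lam Q x)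
     = ennreal (- ln (blahut_sigma d lam Q x))"
proof -
  interpret Q: prob_space Q using Q by (rule prob_algebra_prob)
  have sQ: "sets Q = sets MY" using Q by (rule prob_algebra_sets)
  define f where "f = rho Q x"
  have fm[measurable]: "f \<in> borel_measurable Q"
    unfolding f_def using measurable_Pair2[OF rho_meas[OF Q] x] by simp
  have Kd: "blahut_kernel d lam Q x = density Q f" unfolding f_def kernel_eq ..
  have N: "prob_space (density Q f)" using kernel_prob[OF Q x] Kd by simp
  have dm[measurable]: "(\<lambda>y. d x y) \<in> borel_measurable Q" by (rule d_y[OF sQ x])
  define S where "S = blahut_sigma d lam Q x"
  have S: "0 < S" "S \<le> 1" using sig_props[OF Q x] by (auto simp: S_def)
  define c where "c = - ln S"
  have c0: "0 \<le> c" using S by (simp add: c_def)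
  define A where "A = (\<integral>\<^sup>+ y. ennreal (ln (enn2real (f y))) \<partial>density Q f)"
  define B where "B = (\<integral>\<^sup>+ y. ennreal (- ln (enn2real (f y))) \<partial>density Q f)"
  define e where "e = (\<integral>\<^sup>+ y. ennreal (d x y) \<partial>density Q f)"
  have B1: "B \<le> 1" unfolding B_def by (rule neg_part_le1[OF Q.prob_space_axioms fm])
  have BA: "B \<le> A" unfolding A_def B_def by (rule rel_nonneg[OF Q.prob_space_axioms fm N])
  have rel: "rel_entropy (density Q f) Q = enn2ereal A - enn2ereal B"
    unfolding A_def B_def by (rule rel_entropy_density[OF Q.prob_space_axioms fm])
  have pw: "ennreal (ln (enn2real (f y))) + ennreal (lam * d x y) = ennreal (- ln (enn2real (f y))) + ennreal c" for y
  proof -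
    have fy: "enn2real (f y) = exp (- lam * d x y) / S"
      using S by (simp add: f_def rho_def S_def)
    have l: "ln (enn2real (f y)) = - lam * d x y + c"
      using S unfolding fy by (simp add: ln_div c_def)
    have L: "0 \<le> lam * d x y" using lam dnn by simp
    have "max (ln (enn2real (f y))) 0 + max (lam * d x y) 0 = max (- ln (enn2real (f y))) 0 + max c 0"
      unfolding l using c0 L by (simp add: max_def)
    then show ?thesis
      using ennreal_sum2_le[of "ln (enn2real (f y))" "lam * d x y" "- ln (enn2real (f y))" c]
        ennreal_sum2_le[of "- ln (enn2real (f y))" c "ln (enn2real (f y))" "lam * d x y"]
      by (simp add: antisym)
  qed
  have "A + ennreal lam * e = (\<integral>\<^sup>+ y. ennreal (ln (enn2real (f y))) + ennreal (lam * d x y) \<partial>density Q f)"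
    unfolding A_def e_def using lam dnn
    by (subst nn_integral_add) (auto simp: ennreal_mult nn_integral_cmult)
  also have "\<dots> = (\<integral>\<^sup>+ y. ennreal (- ln (enn2real (f y))) + ennreal c \<partial>density Q f)"
    by (simp add: pw)
  also have "\<dots> = B + ennreal c"
    unfolding B_def using prob_space.emeasure_space_1[OF N]
    by (subst nn_integral_add) auto
  finally have eq: "A + ennreal lam * e = B + ennreal c" .
  have "(A - B) + ennreal lam * e = ennreal c"
    by (rule aux3[OF _ BA eq]) (use B1 in \<open>auto simp: top_unique\<close>)
  then show ?thesis using rel Kd by (simp add: e2eenreal_enn2ereal_diff c_def S_def e_def)
qed

lemma G3:
  assumes Q: "Q \<in> space (prob_algebra MY)"
  shows "cond_rel_entropy P (blahut_kernel d lam Q) Q + ereal lam * exp_distortion P (blahut_kernel d lam Q) d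
     = enn2ereal (Phi Q)"
proof -
  define K where "K = blahut_kernel d lam Q"
  have K: "K \<in> P \<rightarrow>\<^sub>M prob_algebra MY" unfolding K_def by (rule kernel_meas[OF Q])
  define C where "C x = ennreal (- ln (blahut_sigma d lam Q x))" for x
  define E where "E x = (\<integral>\<^sup>+ y. ennreal (d x y) \<partial>K x)" for x
  define R where "R x = e2ennreal (rel_entropy (K x) Q)" for x
  have Cm: "C \<in> borel_measurable P" unfolding C_def by (rule C_meas[OF Q])
  have Em: "E \<in> borel_measurable P" unfolding E_def by (rule E_meas[OF K])
  have pw: "R x + ennreal lam * E x = C x" if x: "x \<in> space P" for x
    unfolding R_def E_def C_def K_def by (rule G3x[OF Q x])
  have le: "ennreal lam * E x \<le> C x" if x: "x \<in> space P" for x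
    using pw[OF x] by (metis add.commute le_iff_add)
  have R: "R x = C x - ennreal lam * E x" if x: "x \<in> space P" for x
    using pw[OF x] le[OF x] by (metis add_diff_self_ennreal C_def add.commute ennreal_add_diff_cancel_left ennreal_neq_top top_unique le_iff_add)
  have "(\<integral>\<^sup>+ x. R x \<partial>P) + ennreal lam * (\<integral>\<^sup>+ x. E x \<partial>P)
      = (\<integral>\<^sup>+ x. C x - ennreal lam * E x \<partial>P) + ennreal lam * (\<integral>\<^sup>+ x. E x \<partial>P)"
    by (simp add: R cong: nn_integral_cong)
  also have "\<dots> = (\<integral>\<^sup>+ x. (C x - ennreal lam * E x) + ennreal lam * E x \<partial>P)"
    using Cm Em by (subst nn_integral_add) (auto simp: nn_integral_cmult)
  also have "\<dots> = (\<integral>\<^sup>+ x. C x \<partial>P)"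
    by (intro nn_integral_cong) (simp add: le diff_add_cancel_ennreal)
  finally have "(\<integral>\<^sup>+ x. R x \<partial>P) + ennreal lam * (\<integral>\<^sup>+ x. E x \<partial>P) = Phi Q"
    unfolding Phi_def C_def .
  then show ?thesis
    unfolding cond_rel_entropy_def exp_distortion_def using lam
    by (simp add: ereal_conv R_def E_def K_def)
qed

lemma BF:
  assumes Q: "Q \<in> space (prob_algebra MY)"
  shows "(INF K \<in> P \<rightarrow>\<^sub>M prob_algebra MY. cond_rel_entropy P K Q + ereal lam * exp_distortion P K d)
    = enn2ereal (Phi Q)"
proof (rule antisym)
  show "(INF K \<in> P \<rightarrow>\<^sub>M prob_algebra MY. cond_rel_entropy P K Q + ereal lam * exp_distortion P K d)
    \<le> enn2ereal (Phi Q)"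
    using INF_lower[OF kernel_meas[OF Q], of "\<lambda>K. cond_rel_entropy P K Q + ereal lam * exp_distortion P K d"]
    by (simp add: G3[OF Q])
  show "enn2ereal (Phi Q) \<le> (INF K \<in> P \<rightarrow>\<^sub>M prob_algebra MY. cond_rel_entropy P K Q + ereal lam * exp_distortion P K d)"
    by (rule INF_greatest) (rule G2[OF Q])
qed

lemma Qj_in:
  assumes Q0: "Q0 \<in> space (prob_algebra MY)"
  shows "blahut_out P d lam Q0 j \<in> space (prob_algebra MY)"
  by (induction j) (auto simp: Q0 out_in)

lemma BF_j:
  assumes Q0: "Q0 \<in> space (prob_algebra MY)"
  shows "blahut_F P MY d lam Q0 (Suc j) = enn2ereal (Phi (blahut_out P d lam Q0 j))"
  unfolding blahut_F_def using BF[OF Qj_in[OF Q0]] by simp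

end

lemma ereal_aux4:
  fixes Phi A' B' AI BI X AQ BQ :: ennreal
  assumes fin: "B' \<noteq> \<infinity>" "BI \<noteq> \<infinity>" "BQ \<noteq> \<infinity>"
    and le: "Phi + A' + BI + BQ \<le> AI + X + AQ + B'"
  shows "enn2ereal Phi + (enn2ereal A' - enn2ereal B') \<le> (enn2ereal AI - enn2ereal BI) + enn2ereal X + (enn2ereal AQ - enn2ereal BQ)"
proof (cases "AI = \<infinity> \<or> X = \<infinity> \<or> AQ = \<infinity>")
  case True
  have ge: "0 \<le> enn2ereal Z" for Z by simp
  have f: "enn2ereal B' = ereal (enn2real B')" "enn2ereal BI = ereal (enn2real BI)" "enn2ereal BQ = ereal (enn2real BQ)"
    using fin by (simp_all add: enn2ereal_ennreal[symmetric] less_top)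
  have r: "(enn2ereal AI - enn2ereal BI) + enn2ereal X + (enn2ereal AQ - enn2ereal BQ) = \<infinity>"
    using True ge[of AI] ge[of X] ge[of AQ] unfolding f by (cases "enn2ereal AI"; cases "enn2ereal X"; cases "enn2ereal AQ") auto
  show ?thesis by (subst r) simp
next
  case False
  have le': "enn2ereal Phi + enn2ereal A' + enn2ereal BI + enn2ereal BQ \<le> enn2ereal AI + enn2ereal X + enn2ereal AQ + enn2ereal B'"
    using le by (simp add: less_eq_ennreal.rep_eq plus_ennreal.rep_eq)
  have fin2: "AI \<noteq> \<infinity>" "X \<noteq> \<infinity>" "AQ \<noteq> \<infinity>" using False by auto
  have "AI + X + AQ + B' \<noteq> \<infinity>" using fin fin2 by (simp add: ennreal_add_eq_top)
  then have "Phi + A' + BI + BQ \<noteq> \<infinity>" using le by (auto simp: top_unique)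
  then have fin3: "Phi \<noteq> \<infinity>" "A' \<noteq> \<infinity>" by (auto simp: ennreal_add_eq_top)
  have f: "enn2ereal Z = ereal (enn2real Z)" if "Z \<noteq> \<infinity>" for Z
    using that by (simp add: enn2ereal_ennreal[symmetric] less_top)
  show ?thesis using le' unfolding f[OF fin(1)] f[OF fin(2)] f[OF fin(3)] f[OF fin2(1)] f[OF fin2(2)]
    f[OF fin2(3)] f[OF fin3(1)] f[OF fin3(2)] by simp
qed

lemma rel_ge0:
  assumes M: "prob_space M" and N: "prob_space N" and s: "sets N = sets M"
  shows "0 \<le> rel_entropy N M"
proof (cases "absolutely_continuous M N")
  case True
  interpret M: prob_space M by (rule M)
  define f where "f = RN_deriv M N"
  have fm: "f \<in> borel_measurable M" unfolding f_def by simp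
  have Nd: "N = density M f" unfolding f_def using M.density_RN_deriv[OF True s] by simp
  show ?thesis unfolding Nd rel_entropy_density[OF M fm]
    using rel_nonneg[OF M fm] N Nd by (simp add: less_eq_ennreal.rep_eq ereal_diff_positive)
next
  case False
  then show ?thesis by (simp add: rel_entropy_def)
qed

lemma rel_form:
  assumes M: "prob_space M" and N: "prob_space N" and s: "sets N = sets M"
    and ac: "absolutely_continuous M N"
  shows "N = density M (RN_deriv M N)"
proof -
  interpret M: prob_space M by (rule M)
  show ?thesis using M.density_RN_deriv[OF ac s] by simp
qed

context bl
begin

lemma Kj_meas:
  assumes K: "K \<in> P \<rightarrow>\<^sub>M prob_algebra MY"
  shows "(\<lambda>x. distr (K x) (P \<Otimes>\<^sub>M MY) (\<lambda>y. (x, y))) \<in> P \<rightarrow>\<^sub>M prob_algebra (P \<Otimes>\<^sub>M MY)"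
  by (rule measurable_distr_prob_space2[OF K]) simp

lemma J_in:
  assumes K: "K \<in> P \<rightarrow>\<^sub>M prob_algebra MY"
  shows "joint_law P MY K \<in> space (prob_algebra (P \<Otimes>\<^sub>M MY))"
  unfolding joint_law_def
  using prob_space_bind'[OF P_in Kj_meas[OF K]] sets_bind'[OF P_in Kj_meas[OF K]]
  by (simp add: space_prob_algebra)

lemma PK_in:
  assumes K: "K \<in> P \<rightarrow>\<^sub>M prob_algebra MY"
  shows "output_law P K \<in> space (prob_algebra MY)"
  unfolding output_law_def
  using prob_space_bind'[OF P_in K] sets_bind'[OF P_in K]
  by (simp add: space_prob_algebra)

lemma J_int:
  assumes K: "K \<in> P \<rightarrow>\<^sub>M prob_algebra MY" and h: "h \<in> borel_measurable (P \<Otimes>\<^sub>M MY)"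
  shows "(\<integral>\<^sup>+ z. h z \<partial>joint_law P MY K) = (\<integral>\<^sup>+ x. \<integral>\<^sup>+ y. h (x, y) \<partial>K x \<partial>P)"
  unfolding joint_law_def
proof (subst nn_integral_bind[OF h measurable_prob_algebraD[OF Kj_meas[OF K]]], rule nn_integral_cong)
  fix x assume x: "x \<in> space P"
  have sK: "sets (K x) = sets MY"
    using measurable_space[OF K x] by (simp add: space_prob_algebra)
  have m: "(\<lambda>y. (x, y)) \<in> K x \<rightarrow>\<^sub>M P \<Otimes>\<^sub>M MY"
    using measurable_Pair1'[OF x, of MY] by (simp add: measurable_cong_sets[OF sK refl])
  show "(\<integral>\<^sup>+ z. h z \<partial>distr (K x) (P \<Otimes>\<^sub>M MY) (\<lambda>y. (x, y))) = (\<integral>\<^sup>+ y. h (x, y) \<partial>K x)"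
    by (rule nn_integral_distr[OF m]) (use h in simp)
qed

lemma J_fst:
  assumes K: "K \<in> P \<rightarrow>\<^sub>M prob_algebra MY" and f: "f \<in> borel_measurable P"
  shows "(\<integral>\<^sup>+ z. f (fst z) \<partial>joint_law P MY K) = (\<integral>\<^sup>+ x. f x \<partial>P)"
proof -
  have "(\<integral>\<^sup>+ z. f (fst z) \<partial>joint_law P MY K) = (\<integral>\<^sup>+ x. \<integral>\<^sup>+ y. f x \<partial>K x \<partial>P)"
    by (subst J_int[OF K]) (use f in auto)
  also have "\<dots> = (\<integral>\<^sup>+ x. f x \<partial>P)"
  proof (rule nn_integral_cong)
    fix x assume x: "x \<in> space P"
    have "prob_space (K x)" using measurable_space[OF K x] by (simp add: space_prob_algebra)
    then show "(\<integral>\<^sup>+ y. f x \<partial>K x) = f x" by (simp add: prob_space.emeasure_space_1)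
  qed
  finally show ?thesis .
qed

lemma J_snd:
  assumes K: "K \<in> P \<rightarrow>\<^sub>M prob_algebra MY" and f: "f \<in> borel_measurable MY"
  shows "(\<integral>\<^sup>+ z. f (snd z) \<partial>joint_law P MY K) = (\<integral>\<^sup>+ y. f y \<partial>output_law P K)"
proof -
  have "(\<integral>\<^sup>+ z. f (snd z) \<partial>joint_law P MY K) = (\<integral>\<^sup>+ x. \<integral>\<^sup>+ y. f y \<partial>K x \<partial>P)"
    by (subst J_int[OF K]) (use f in auto)
  also have "\<dots> = (\<integral>\<^sup>+ y. f y \<partial>output_law P K)"
    unfolding output_law_def by (rule nn_integral_bind[OF f measurable_prob_algebraD[OF K], symmetric])
  finally show ?thesis .
qed

lemma J_d:
  assumes K: "K \<in> P \<rightarrow>\<^sub>M prob_algebra MY"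
  shows "exp_distortion P K d = enn2ereal (\<integral>\<^sup>+ z. ennreal (d (fst z) (snd z)) \<partial>joint_law P MY K)"
  unfolding exp_distortion_def using dm by (subst J_int[OF K]) (auto simp: case_prod_beta')

lemma J_snd_distr:
  assumes K: "K \<in> P \<rightarrow>\<^sub>M prob_algebra MY"
  shows "distr (joint_law P MY K) MY snd = output_law P K"
proof (rule measure_eqI)
  have sJ: "sets (joint_law P MY K) = sets (P \<Otimes>\<^sub>M MY)" using J_in[OF K] by (simp add: space_prob_algebra)
  have sPK: "sets (output_law P K) = sets MY" using PK_in[OF K] by (simp add: space_prob_algebra)
  show "sets (distr (joint_law P MY K) MY snd) = sets (output_law P K)" using sPK by simp
  fix A assume "A \<in> sets (distr (joint_law P MY K) MY snd)"
  then have A: "A \<in> sets MY" by simp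
  have ms: "snd \<in> joint_law P MY K \<rightarrow>\<^sub>M MY" by (simp add: measurable_cong_sets[OF sJ refl])
  have "emeasure (distr (joint_law P MY K) MY snd) A = (\<integral>\<^sup>+ y. indicator A y \<partial>distr (joint_law P MY K) MY snd)"
    using A by simp
  also have "\<dots> = (\<integral>\<^sup>+ z. indicator A (snd z) \<partial>joint_law P MY K)"
    by (rule nn_integral_distr[OF ms]) (use A in simp)
  also have "\<dots> = (\<integral>\<^sup>+ y. indicator A y \<partial>output_law P K)"
    by (rule J_snd[OF K]) (use A in simp)
  also have "\<dots> = emeasure (output_law P K) A" using A sPK by simp
  finally show "emeasure (distr (joint_law P MY K) MY snd) A = emeasure (output_law P K) A" .
qed

lemma J_AE_snd:
  assumes K: "K \<in> P \<rightarrow>\<^sub>M prob_algebra MY"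
    and ae: "AE y in output_law P K. R y" and R: "{y \<in> space MY. R y} \<in> sets MY"
  shows "AE z in joint_law P MY K. R (snd z)"
proof -
  have sJ: "sets (joint_law P MY K) = sets (P \<Otimes>\<^sub>M MY)" using J_in[OF K] by (simp add: space_prob_algebra)
  have ms: "snd \<in> joint_law P MY K \<rightarrow>\<^sub>M MY" by (simp add: measurable_cong_sets[OF sJ refl])
  show ?thesis using ae unfolding J_snd_distr[OF K, symmetric] by (subst (asm) AE_distr_iff[OF ms R])
qed

end

lemma ennreal_sum5_le:
  assumes "max c1 0 + max c2 0 + max c3 0 + max c4 0 + max c5 0 \<le> max a1 0 + max a2 0 + max a3 0 + max a4 0 + max a5 0"
  shows "ennreal c1 + ennreal c2 + ennreal c3 + ennreal c4 + ennreal c5 \<le> ennreal a1 + ennreal a2 + ennreal a3 + ennreal a4 + ennreal a5"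
proof -
  have "ennreal c1 + ennreal c2 + ennreal c3 + ennreal c4 + ennreal c5 = ennreal (max c1 0 + max c2 0 + max c3 0 + max c4 0 + max c5 0)"
    by (subst ennreal_plus; simp)+
  also have "\<dots> \<le> ennreal (max a1 0 + max a2 0 + max a3 0 + max a4 0 + max a5 0)" using assms by (rule ennreal_leI)
  also have "\<dots> = ennreal a1 + ennreal a2 + ennreal a3 + ennreal a4 + ennreal a5"
    by (subst ennreal_plus; simp)+
  finally show ?thesis .
qed

lemma W_div: "0 < (w::ennreal) \<Longrightarrow> w < \<infinity> \<Longrightarrow> w * (h / w) = h"
  by (metis ennreal_divide_self ennreal_divide_times infinity_ennreal_def mult_1 zero_order(5))

lemma enn2real_div: "0 < enn2real (h::ennreal) \<Longrightarrow> 0 < enn2real w \<Longrightarrow> enn2real (h / w) = enn2real h / enn2real w"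
  by (smt (verit, del_insts) divide_ennreal enn2real_ennreal
    enn2real_positive_iff ennreal_enn2real zero_compare_simps(11))

lemma nn_integral_add4:
  assumes [measurable]: "f1 \<in> borel_measurable M" "f2 \<in> borel_measurable M" "f3 \<in> borel_measurable M" "f4 \<in> borel_measurable M"
  shows "(\<integral>\<^sup>+ x. f1 x + f2 x + f3 x + f4 x \<partial>M) = integral\<^sup>N M f1 + integral\<^sup>N M f2 + integral\<^sup>N M f3 + integral\<^sup>N M f4"
  by (simp add: nn_integral_add)

context bl
begin

lemma G5:
  assumes Q: "Q \<in> space (prob_algebra MY)" and K: "K \<in> P \<rightarrow>\<^sub>M prob_algebra MY"
  shows "enn2ereal (Phi Q) + rel_entropy (output_law P K) (bind P (blahut_kernel d lam Q))
     \<le> mutual_info P MY K + ereal lam * exp_distortion P K d + rel_entropy (output_law P K) Q"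
proof -
  interpret Q: prob_space Q using Q by (rule prob_algebra_prob)
  have sQ: "sets Q = sets MY" using Q by (rule prob_algebra_sets)
  interpret P: prob_space P by (rule P)
  define PK where "PK = output_law P K"
  have PK: "PK \<in> space (prob_algebra MY)" unfolding PK_def by (rule PK_in[OF K])
  interpret PKp: prob_space PK using PK by (rule prob_algebra_prob)
  have sPK: "sets PK = sets MY" using PK by (rule prob_algebra_sets)
  define J where "J = joint_law P MY K"
  have Jp: "prob_space J" and sJ: "sets J = sets (P \<Otimes>\<^sub>M MY)"
    using J_in[OF K] unfolding J_def by (auto simp: space_prob_algebra)
  have MP: "prob_space (P \<Otimes>\<^sub>M PK)" by (rule prob_space_pair[OF P PKp.prob_space_axioms])
  have sPP: "sets (P \<Otimes>\<^sub>M PK) = sets (P \<Otimes>\<^sub>M MY)" by (rule sets_pair_measure_cong[OF refl sPK])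
  define Q' where "Q' = bind P (blahut_kernel d lam Q)"
  have Q'd: "Q' = density Q (W Q)" unfolding Q'_def by (rule out_density[OF Q])
  have Q'in: "Q' \<in> space (prob_algebra MY)" unfolding Q'_def by (rule out_in[OF Q])
  interpret Q'p: prob_space Q' using Q'in by (rule prob_algebra_prob)
  have sQ': "sets Q' = sets MY" using Q'in by (rule prob_algebra_sets)
  have mi: "mutual_info P MY K = rel_entropy J (P \<Otimes>\<^sub>M PK)"
    unfolding mutual_info_def J_def PK_def ..
  have ge1: "0 \<le> rel_entropy J (P \<Otimes>\<^sub>M PK)" by (rule rel_ge0[OF MP Jp]) (simp add: sJ sPP)
  have ge2: "0 \<le> rel_entropy PK Q" by (rule rel_ge0[OF Q.prob_space_axioms PKp.prob_space_axioms]) (simp add: sQ sPK)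
  have ge3: "0 \<le> ereal lam * exp_distortion P K d" using lam by (simp add: exp_distortion_def)
  show ?thesis
  proof (cases "absolutely_continuous (P \<Otimes>\<^sub>M PK) J \<and> absolutely_continuous Q PK")
    case False
    then have "rel_entropy J (P \<Otimes>\<^sub>M PK) = \<infinity> \<or> rel_entropy PK Q = \<infinity>"
      by (auto simp: rel_entropy_def)
    then have r: "mutual_info P MY K + ereal lam * exp_distortion P K d + rel_entropy (output_law P K) Q = \<infinity>"
      using ge1 ge2 ge3 unfolding mi PK_def[symmetric] by auto
    show ?thesis unfolding r by simp
  next
    case True
    define f where "f = RN_deriv (P \<Otimes>\<^sub>M PK) J"
    have fm[measurable]: "f \<in> borel_measurable (P \<Otimes>\<^sub>M PK)" unfolding f_def by simp
    have Jd: "J = density (P \<Otimes>\<^sub>M PK) f" unfolding f_def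
      by (rule rel_form[OF MP Jp]) (use True sJ sPP in auto)
    define h where "h = RN_deriv Q PK"
    have hmQ: "h \<in> borel_measurable Q" unfolding h_def by simp
    have hm[measurable]: "h \<in> borel_measurable MY" using hmQ by (simp add: measurable_cong_sets[OF sQ refl])
    have hmPK[measurable]: "h \<in> borel_measurable PK" using hm by (simp add: measurable_cong_sets[OF sPK refl])
    have PKd: "PK = density Q h" unfolding h_def
      by (rule rel_form[OF Q.prob_space_axioms PKp.prob_space_axioms]) (use True sQ sPK in auto)
    have WmQ: "W Q \<in> borel_measurable Q" by (rule W_meas[OF Q])
    have Wm[measurable]: "W Q \<in> borel_measurable MY" using WmQ by (simp add: measurable_cong_sets[OF sQ refl])
    have WmPK[measurable]: "W Q \<in> borel_measurable PK" using Wm by (simp add: measurable_cong_sets[OF sPK refl])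
    define h' where "h' y = h y / W Q y" for y
    have h'm[measurable]: "h' \<in> borel_measurable MY" unfolding h'_def by measurable
    have h'mQ': "h' \<in> borel_measurable Q'" using h'm by (simp add: measurable_cong_sets[OF sQ' refl])
    have h'mPK[measurable]: "h' \<in> borel_measurable PK" using h'm by (simp add: measurable_cong_sets[OF sPK refl])
    have PKd': "PK = density Q' h'"
    proof -
      have "density Q' h' = density Q (\<lambda>y. W Q y * h' y)"
        unfolding Q'd by (rule density_density_eq[OF WmQ]) (use h'm in \<open>simp add: measurable_cong_sets[OF sQ refl]\<close>)
      also have "\<dots> = density Q h"
      proof (rule density_cong)
        show "(\<lambda>y. W Q y * h' y) \<in> borel_measurable Q" using h'm by (simp add: measurable_cong_sets[OF sQ refl])
        show "h \<in> borel_measurable Q" by (rule hmQ)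
        show "AE y in Q. W Q y * h' y = h y"
          using W_fin[OF Q]
        proof (rule AE_mp, intro AE_I2 impI)
          fix y assume "y \<in> space Q" "W Q y < \<infinity>"
          moreover have "0 < W Q y" using W_pos[OF Q] \<open>y \<in> space Q\<close> sets_eq_imp_space_eq[OF sQ] by simp
          ultimately show "W Q y * h' y = h y" unfolding h'_def by (simp add: W_div)
        qed
      qed
      finally show ?thesis using PKd by simp
    qed
    define lp :: "ennreal \<Rightarrow> ennreal" where "lp v = ennreal (ln (enn2real v))" for v
    define ln' :: "ennreal \<Rightarrow> ennreal" where "ln' v = ennreal (- ln (enn2real v))" for v
    define AI where "AI = (\<integral>\<^sup>+ z. lp (f z) \<partial>J)"
    define BI where "BI = (\<integral>\<^sup>+ z. ln' (f z) \<partial>J)"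
    define AQ where "AQ = (\<integral>\<^sup>+ y. lp (h y) \<partial>PK)"
    define BQ where "BQ = (\<integral>\<^sup>+ y. ln' (h y) \<partial>PK)"
    define A' where "A' = (\<integral>\<^sup>+ y. lp (h' y) \<partial>PK)"
    define B' where "B' = (\<integral>\<^sup>+ y. ln' (h' y) \<partial>PK)"
    define Ed where "Ed = (\<integral>\<^sup>+ z. ennreal (d (fst z) (snd z)) \<partial>J)"
    have rI: "mutual_info P MY K = enn2ereal AI - enn2ereal BI"
      unfolding mi AI_def BI_def lp_def ln'_def Jd by (rule rel_entropy_density[OF MP fm])
    have rQ: "rel_entropy PK Q = enn2ereal AQ - enn2ereal BQ"
      unfolding AQ_def BQ_def lp_def ln'_def unfolding PKd by (rule rel_entropy_density[OF Q.prob_space_axioms hmQ])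
    have r': "rel_entropy PK Q' = enn2ereal A' - enn2ereal B'"
      unfolding A'_def B'_def lp_def ln'_def unfolding PKd' by (rule rel_entropy_density[OF Q'p.prob_space_axioms h'mQ'])
    have BI1: "BI \<le> 1" unfolding BI_def ln'_def Jd by (rule neg_part_le1[OF MP fm])
    have BQ1: "BQ \<le> 1" unfolding BQ_def ln'_def PKd by (rule neg_part_le1[OF Q.prob_space_axioms hmQ])
    have B'1: "B' \<le> 1" unfolding B'_def ln'_def PKd' by (rule neg_part_le1[OF Q'p.prob_space_axioms h'mQ'])
    have Ed: "exp_distortion P K d = enn2ereal Ed" unfolding Ed_def J_def by (rule J_d[OF K])
    have fmJ[measurable]: "f \<in> borel_measurable J" using fm by (simp add: measurable_cong_sets[OF sJ[unfolded sPP[symmetric]] refl])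
    have fstJ[measurable]: "fst \<in> J \<rightarrow>\<^sub>M P" by (simp add: measurable_cong_sets[OF sJ refl])
    have sndJ[measurable]: "snd \<in> J \<rightarrow>\<^sub>M MY" by (simp add: measurable_cong_sets[OF sJ refl])
    have Sm[measurable]: "blahut_sigma d lam Q \<in> borel_measurable P" by (rule sig_meas[OF Q])
    have dPK[measurable]: "(\<lambda>z. d (fst z) (snd z)) \<in> borel_measurable (P \<Otimes>\<^sub>M PK)" by (rule dQ'[OF sPK])
    have dJ[measurable]: "(\<lambda>z. d (fst z) (snd z)) \<in> borel_measurable J"
      using dPK by (simp add: measurable_cong_sets[OF sJ[unfolded sPP[symmetric]] refl])
    interpret PPK: pair_prob_space P PK ..
    define phi where "phi z = exp (- lam * d (fst z) (snd z)) / (blahut_sigma d lam Q (fst z) * enn2real (W Q (snd z)))" for z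
    have phim[measurable]: "phi \<in> borel_measurable (P \<Otimes>\<^sub>M PK)" unfolding phi_def by measurable
    have phi0: "0 \<le> phi z" for z
      unfolding phi_def blahut_sigma_def by (auto intro!: divide_nonneg_nonneg integral_nonneg)
    have phi1: "(\<integral>\<^sup>+ z. ennreal (phi z) \<partial>(P \<Otimes>\<^sub>M PK)) \<le> 1"
    proof -
      have "(\<integral>\<^sup>+ z. ennreal (phi z) \<partial>(P \<Otimes>\<^sub>M PK)) = (\<integral>\<^sup>+ y. \<integral>\<^sup>+ x. ennreal (phi (x, y)) \<partial>P \<partial>PK)"
        by (rule PPK.nn_integral_snd[symmetric]) measurable
      also have "\<dots> \<le> (\<integral>\<^sup>+ y. 1 \<partial>PK)"
      proof (rule nn_integral_mono)
        fix y assume y: "y \<in> space PK"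
        have yQ: "y \<in> space Q" using y sets_eq_imp_space_eq[OF sPK] sets_eq_imp_space_eq[OF sQ] by simp
        have rm: "(\<lambda>x. rho Q x y) \<in> borel_measurable P"
          using measurable_Pair2[OF rho_meas'[OF Q] yQ] by simp
        have "(\<integral>\<^sup>+ x. ennreal (phi (x, y)) \<partial>P) = (\<integral>\<^sup>+ x. rho Q x y * ennreal (1 / enn2real (W Q y)) \<partial>P)"
        proof (rule nn_integral_cong)
          fix x assume x: "x \<in> space P"
          have S: "0 < blahut_sigma d lam Q x" using sig_props[OF Q x] by simp
          have "phi (x, y) = (exp (- lam * d x y) / blahut_sigma d lam Q x) * (1 / enn2real (W Q y))"
            unfolding phi_def by simp
          then show "ennreal (phi (x, y)) = rho Q x y * ennreal (1 / enn2real (W Q y))"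
            unfolding rho_def using S by (simp add: ennreal_mult[symmetric] del: ennreal_mult)
        qed
        also have "\<dots> = W Q y * ennreal (1 / enn2real (W Q y))"
          unfolding W_def by (rule nn_integral_multc[OF rm])
        also have "\<dots> \<le> 1"
        proof (cases "W Q y")
          case (real w)
          then show ?thesis by (cases "w = 0") (auto simp: ennreal_mult[symmetric])
        qed simp
        finally show "(\<integral>\<^sup>+ x. ennreal (phi (x, y)) \<partial>P) \<le> 1" .
      qed
      also have "\<dots> = 1" using PKp.emeasure_space_1 by simp
      finally show ?thesis .
    qed
    define C where "C x = ennreal (- ln (blahut_sigma d lam Q x))" for x
    define a where "a z = lp (f z) + ennreal (lam * d (fst z) (snd z)) + lp (h (snd z)) + ln' (h' (snd z))" for z
    define b where "b z = C (fst z) + lp (h' (snd z)) + ln' (f z) + ln' (h (snd z))" for z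
    have ae1: "AE z in J. 0 < enn2real (f z)" using ae_pos_fin[OF MP fm, folded Jd] Jp by simp
    have aePK: "AE y in PK. 0 < enn2real (h y) \<and> 0 < enn2real (W Q y)"
    proof -
      have a1: "AE y in PK. 0 < enn2real (h y)"
        using ae_pos_fin[OF Q.prob_space_axioms hmQ, folded PKd] PKp.prob_space_axioms by simp
      have "AE y in Q. W Q y < \<infinity>" by (rule W_fin[OF Q])
      then have a2: "AE y in PK. W Q y < \<infinity>" unfolding PKd using hmQ by (subst AE_density) (auto elim: AE_mp)
      show ?thesis using a1 a2 AE_space[of PK]
        by eventually_elim (use W_pos[OF Q] sets_eq_imp_space_eq[OF sPK] in \<open>auto simp: enn2real_positive_iff less_top\<close>)
    qed
    have aeJ: "AE z in J. 0 < enn2real (h (snd z)) \<and> 0 < enn2real (W Q (snd z))"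
      unfolding J_def by (rule J_AE_snd[OF K]) (use aePK[unfolded PK_def] in simp, measurable)
    have aeall: "AE z in J. b z + 1 \<le> a z + ennreal (phi z / enn2real (f z))"
      using ae1 aeJ AE_space[of J]
    proof eventually_elim
      case (elim z)
      have zJ: "z \<in> space (P \<Otimes>\<^sub>M MY)" using elim(3) sets_eq_imp_space_eq[OF sJ] by simp
      have zs: "fst z \<in> space P" "snd z \<in> space MY"
        using zJ unfolding space_pair_measure by auto
      have e1: "0 < enn2real (f z)" "0 < enn2real (h (snd z))" "0 < enn2real (W Q (snd z))"
        using elim(1) elim(2) by blast+
      define t where "t = enn2real (f z)"
      define \<eta> where "\<eta> = enn2real (h (snd z))"
      define w where "w = enn2real (W Q (snd z))"
      define S where "S = blahut_sigma d lam Q (fst z)"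
      define L where "L = lam * d (fst z) (snd z)"
      have t: "0 < t" and \<eta>: "0 < \<eta>" and w: "0 < w" unfolding t_def \<eta>_def w_def by (rule e1)+
      have S: "0 < S" "S \<le> 1" using sig_props[OF Q zs(1)] by (auto simp: S_def)
      have L: "0 \<le> L" using lam dnn by (simp add: L_def)
      define c where "c = - ln S"
      have c0: "0 \<le> c" using S by (simp add: c_def)
      define u where "u = exp (- L) / (S * w) / t"
      have u: "0 < u" using t S w by (simp add: u_def)
      have h': "enn2real (h' (snd z)) = \<eta> / w"
        unfolding h'_def \<eta>_def w_def by (rule enn2real_div[OF e1(2) e1(3)])
      have lnu: "ln u = - L + c - ln w - ln t"
        using t S w by (simp add: u_def c_def ln_div ln_mult)
      have lnh': "ln (\<eta> / w) = ln \<eta> - ln w" using \<eta> w by (simp add: ln_div)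
      have "1 - u \<le> - ln u" using ln_le_minus_one[OF u] by simp
      then have "max c 0 + max (ln (\<eta> / w)) 0 + max (- ln t) 0 + max (- ln \<eta>) 0 + max 1 0
          \<le> max (ln t) 0 + max L 0 + max (ln \<eta>) 0 + max (- ln (\<eta> / w)) 0 + max u 0"
      proof -
        have m1: "max x 0 - max (- x) 0 = x" for x :: real by (simp add: max_def)
        have "max c 0 = c" "max 1 0 = (1::real)" "max L 0 = L" "max u 0 = u" using c0 L u by auto
        then show ?thesis using m1[of "ln t"] m1[of "ln \<eta>"] m1[of "ln (\<eta> / w)"] lnh' lnu \<open>1 - u \<le> - ln u\<close>
          by linarith
      qed
      then have "ennreal c + ennreal (ln (\<eta> / w)) + ennreal (- ln t) + ennreal (- ln \<eta>) + ennreal 1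
          \<le> ennreal (ln t) + ennreal L + ennreal (ln \<eta>) + ennreal (- ln (\<eta> / w)) + ennreal u"
        by (rule ennreal_sum5_le)
      moreover have "phi z / enn2real (f z) = u"
        unfolding phi_def u_def t_def S_def w_def L_def by simp
      ultimately show ?case
        unfolding a_def b_def C_def lp_def ln'_def using h'
        by (simp add: c_def S_def t_def \<eta>_def L_def)
    qed
    have core: "(\<integral>\<^sup>+ z. b z \<partial>J) \<le> (\<integral>\<^sup>+ z. a z \<partial>J)"
      unfolding Jd
    proof (rule gibbs_core[OF MP fm _ phim phi0 phi1])
      show "prob_space (density (P \<Otimes>\<^sub>M PK) f)" using Jd Jp by simp
      show "a \<in> borel_measurable (P \<Otimes>\<^sub>M PK)" unfolding a_def lp_def ln'_def by measurable
      show "b \<in> borel_measurable (P \<Otimes>\<^sub>M PK)" unfolding b_def C_def lp_def ln'_def by measurable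
      show "AE y in density (P \<Otimes>\<^sub>M PK) f. b y + 1 \<le> a y + ennreal (phi y / enn2real (f y))"
        using aeall[unfolded Jd] .
    qed
    have intb: "(\<integral>\<^sup>+ z. b z \<partial>J) = Phi Q + A' + BI + BQ"
    proof -
      have "(\<integral>\<^sup>+ z. b z \<partial>J) = (\<integral>\<^sup>+ z. C (fst z) \<partial>J) + (\<integral>\<^sup>+ z. lp (h' (snd z)) \<partial>J) + (\<integral>\<^sup>+ z. ln' (f z) \<partial>J) + (\<integral>\<^sup>+ z. ln' (h (snd z)) \<partial>J)"
        unfolding b_def C_def lp_def ln'_def by (rule nn_integral_add4) measurable
      also have "(\<integral>\<^sup>+ z. C (fst z) \<partial>J) = Phi Q"
        unfolding J_def Phi_def C_def by (rule J_fst[OF K]) measurable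
      also have "(\<integral>\<^sup>+ z. lp (h' (snd z)) \<partial>J) = A'"
        unfolding J_def A'_def PK_def by (rule J_snd[OF K]) (unfold lp_def, measurable)
      also have "(\<integral>\<^sup>+ z. ln' (h (snd z)) \<partial>J) = BQ"
        unfolding J_def BQ_def PK_def by (rule J_snd[OF K]) (unfold ln'_def, measurable)
      finally show ?thesis unfolding BI_def .
    qed
    have inta: "(\<integral>\<^sup>+ z. a z \<partial>J) = AI + ennreal lam * Ed + AQ + B'"
    proof -
      have "(\<integral>\<^sup>+ z. a z \<partial>J) = (\<integral>\<^sup>+ z. lp (f z) \<partial>J) + (\<integral>\<^sup>+ z. ennreal lam * ennreal (d (fst z) (snd z)) \<partial>J) + (\<integral>\<^sup>+ z. lp (h (snd z)) \<partial>J) + (\<integral>\<^sup>+ z. ln' (h' (snd z)) \<partial>J)"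
        unfolding a_def lp_def ln'_def using lam dnn by (simp only: ennreal_mult) (rule nn_integral_add4; measurable)
      also have "(\<integral>\<^sup>+ z. ennreal lam * ennreal (d (fst z) (snd z)) \<partial>J) = ennreal lam * Ed"
        unfolding Ed_def by (rule nn_integral_cmult) measurable
      also have "(\<integral>\<^sup>+ z. lp (h (snd z)) \<partial>J) = AQ"
        unfolding J_def AQ_def PK_def by (rule J_snd[OF K]) (unfold lp_def, measurable)
      also have "(\<integral>\<^sup>+ z. ln' (h' (snd z)) \<partial>J) = B'"
        unfolding J_def B'_def PK_def by (rule J_snd[OF K]) (unfold ln'_def, measurable)
      finally show ?thesis unfolding AI_def .
    qed
    have fin: "B' \<noteq> \<infinity>" "BI \<noteq> \<infinity>" "BQ \<noteq> \<infinity>" using B'1 BI1 BQ1 by (auto simp: top_unique)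
    have main: "enn2ereal (Phi Q) + (enn2ereal A' - enn2ereal B')
        \<le> (enn2ereal AI - enn2ereal BI) + enn2ereal (ennreal lam * Ed) + (enn2ereal AQ - enn2ereal BQ)"
      by (rule ereal_aux4[OF fin]) (use core intb inta in simp)
    have "ereal lam * exp_distortion P K d = enn2ereal (ennreal lam * Ed)"
      using lam by (simp add: Ed times_ennreal.rep_eq enn2ereal_ennreal)
    then show ?thesis using main rI rQ r' unfolding Q'_def[symmetric] PK_def[symmetric] by simp
  qed
qed

end

lemma ereal_aux5:
  fixes AI BI X Xp Xm Phi :: ennreal
  assumes fin: "BI \<noteq> \<infinity>" "Xm \<noteq> \<infinity>" and le: "Xm \<le> Xp"
    and eq: "AI + X + Xp = BI + Phi + Xm"
  shows "(enn2ereal AI - enn2ereal BI) + enn2ereal X \<le> enn2ereal Phi"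
proof (cases "Phi = \<infinity>")
  case True
  have f: "enn2ereal BI = ereal (enn2real BI)" using fin by (simp add: enn2ereal_ennreal[symmetric] less_top)
  have "enn2ereal AI - enn2ereal BI + enn2ereal X \<le> \<infinity>" by simp
  then show ?thesis using True by simp
next
  case False
  have "BI + Phi + Xm \<noteq> \<infinity>" using fin False by (simp add: ennreal_add_eq_top)
  then have "AI + X + Xp \<noteq> \<infinity>" using eq by simp
  then have fin2: "AI \<noteq> \<infinity>" "X \<noteq> \<infinity>" "Xp \<noteq> \<infinity>" by (auto simp: ennreal_add_eq_top)
  have f: "enn2ereal Z = ereal (enn2real Z)" if "Z \<noteq> \<infinity>" for Z
    using that by (simp add: enn2ereal_ennreal[symmetric] less_top)
  have eq': "enn2real AI + enn2real X + enn2real Xp = enn2real BI + enn2real Phi + enn2real Xm"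
  proof -
    have "enn2real (AI + X + Xp) = enn2real (BI + Phi + Xm)" using eq by simp
    then show ?thesis using fin fin2 False by (simp add: enn2real_plus less_top ennreal_add_eq_top)
  qed
  have le': "enn2real Xm \<le> enn2real Xp" using le fin2 by (simp add: enn2real_mono less_top)
  show ?thesis unfolding f[OF fin(1)] f[OF fin2(1)] f[OF fin2(2)] f[OF False] using eq' le' by simp
qed

lemma nn_integral_add3:
  assumes [measurable]: "f1 \<in> borel_measurable M" "f2 \<in> borel_measurable M" "f3 \<in> borel_measurable M"
  shows "(\<integral>\<^sup>+ x. f1 x + f2 x + f3 x \<partial>M) = integral\<^sup>N M f1 + integral\<^sup>N M f2 + integral\<^sup>N M f3"
  by (simp add: nn_integral_add)

context bl
begin

lemma JG_density:
  assumes Q: "Q \<in> space (prob_algebra MY)"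
  shows "joint_law P MY (blahut_kernel d lam Q) = density (P \<Otimes>\<^sub>M Q) (\<lambda>z. rho Q (fst z) (snd z))"
proof (rule measure_eqI)
  interpret Q: prob_space Q using Q by (rule prob_algebra_prob)
  have sQ: "sets Q = sets MY" using Q by (rule prob_algebra_sets)
  have K: "blahut_kernel d lam Q \<in> P \<rightarrow>\<^sub>M prob_algebra MY" by (rule kernel_meas[OF Q])
  have sJ: "sets (joint_law P MY (blahut_kernel d lam Q)) = sets (P \<Otimes>\<^sub>M MY)"
    using J_in[OF K] by (simp add: space_prob_algebra)
  have sPQ: "sets (P \<Otimes>\<^sub>M Q) = sets (P \<Otimes>\<^sub>M MY)" by (rule sets_pair_measure_cong[OF refl sQ])
  have rm: "(\<lambda>z. rho Q (fst z) (snd z)) \<in> borel_measurable (P \<Otimes>\<^sub>M Q)"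
    using rho_meas[OF Q] by (simp add: case_prod_beta')
  show "sets (joint_law P MY (blahut_kernel d lam Q)) = sets (density (P \<Otimes>\<^sub>M Q) (\<lambda>z. rho Q (fst z) (snd z)))"
    using sJ sPQ by simp
  fix A assume "A \<in> sets (joint_law P MY (blahut_kernel d lam Q))"
  then have A: "A \<in> sets (P \<Otimes>\<^sub>M MY)" using sJ by simp
  have AQ: "A \<in> sets (P \<Otimes>\<^sub>M Q)" using A sPQ by simp
  have "emeasure (joint_law P MY (blahut_kernel d lam Q)) A = (\<integral>\<^sup>+ z. indicator A z \<partial>joint_law P MY (blahut_kernel d lam Q))"
    using A sJ by simp
  also have "\<dots> = (\<integral>\<^sup>+ x. \<integral>\<^sup>+ y. indicator A (x, y) \<partial>blahut_kernel d lam Q x \<partial>P)"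
    by (rule J_int[OF K]) (use A in simp)
  also have "\<dots> = (\<integral>\<^sup>+ x. \<integral>\<^sup>+ y. rho Q x y * indicator A (x, y) \<partial>Q \<partial>P)"
  proof (rule nn_integral_cong)
    fix x assume x: "x \<in> space P"
    have m: "rho Q x \<in> borel_measurable Q"
      using measurable_Pair2[OF rho_meas[OF Q] x] by simp
    have mi: "(\<lambda>y. indicator A (x, y)) \<in> borel_measurable Q"
      using measurable_Pair2[OF borel_measurable_indicator[OF AQ] x] by simp
    show "(\<integral>\<^sup>+ y. indicator A (x, y) \<partial>blahut_kernel d lam Q x) = (\<integral>\<^sup>+ y. rho Q x y * indicator A (x, y) \<partial>Q)"
      unfolding kernel_eq by (rule nn_integral_density[OF m mi])
  qed
  also have "\<dots> = (\<integral>\<^sup>+ z. rho Q (fst z) (snd z) * indicator A z \<partial>(P \<Otimes>\<^sub>M Q))"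
    using Q.nn_integral_fst[of "\<lambda>z. rho Q (fst z) (snd z) * indicator A z" P] rm AQ by simp
  also have "\<dots> = emeasure (density (P \<Otimes>\<^sub>M Q) (\<lambda>z. rho Q (fst z) (snd z))) A"
    by (rule emeasure_density[OF rm AQ, symmetric])
  finally show "emeasure (joint_law P MY (blahut_kernel d lam Q)) A = emeasure (density (P \<Otimes>\<^sub>M Q) (\<lambda>z. rho Q (fst z) (snd z))) A" .
qed

lemma G4:
  assumes Q: "Q \<in> space (prob_algebra MY)"
  shows "mutual_info P MY (blahut_kernel d lam Q) + ereal lam * exp_distortion P (blahut_kernel d lam Q) d
    \<le> enn2ereal (Phi Q)"
proof -
  interpret Q: prob_space Q using Q by (rule prob_algebra_prob)
  have sQ: "sets Q = sets MY" using Q by (rule prob_algebra_sets)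
  interpret P: prob_space P by (rule P)
  interpret PQ: pair_prob_space P Q ..
  define G where "G = blahut_kernel d lam Q"
  have K: "G \<in> P \<rightarrow>\<^sub>M prob_algebra MY" unfolding G_def by (rule kernel_meas[OF Q])
  define Q' where "Q' = output_law P G"
  have Q'd: "Q' = density Q (W Q)" unfolding Q'_def output_law_def G_def by (rule out_density[OF Q])
  have Q'in: "Q' \<in> space (prob_algebra MY)" unfolding Q'_def by (rule PK_in[OF K])
  interpret Q'p: prob_space Q' using Q'in by (rule prob_algebra_prob)
  have sQ': "sets Q' = sets MY" using Q'in by (rule prob_algebra_sets)
  define J where "J = joint_law P MY G"
  have Jp: "prob_space J" and sJ: "sets J = sets (P \<Otimes>\<^sub>M MY)"
    using J_in[OF K] unfolding J_def by (auto simp: space_prob_algebra)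
  have MP: "prob_space (P \<Otimes>\<^sub>M Q')" by (rule prob_space_pair[OF P Q'p.prob_space_axioms])
  have sPQ: "sets (P \<Otimes>\<^sub>M Q) = sets (P \<Otimes>\<^sub>M MY)" by (rule sets_pair_measure_cong[OF refl sQ])
  have sPQ': "sets (P \<Otimes>\<^sub>M Q') = sets (P \<Otimes>\<^sub>M MY)" by (rule sets_pair_measure_cong[OF refl sQ'])
  have WmQ[measurable]: "W Q \<in> borel_measurable Q" by (rule W_meas[OF Q])
  have Wm[measurable]: "W Q \<in> borel_measurable MY" using WmQ by (simp add: measurable_cong_sets[OF sQ refl])
  have WmQ'[measurable]: "W Q \<in> borel_measurable Q'" using Wm by (simp add: measurable_cong_sets[OF sQ' refl])
  have rmPQ[measurable]: "(\<lambda>z. rho Q (fst z) (snd z)) \<in> borel_measurable (P \<Otimes>\<^sub>M Q)"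
    using rho_meas[OF Q] by (simp add: case_prod_beta')
  have rmPQ'[measurable]: "(\<lambda>z. rho Q (fst z) (snd z)) \<in> borel_measurable (P \<Otimes>\<^sub>M Q')"
    using rmPQ by (simp add: measurable_cong_sets[OF sPQ[unfolded sPQ'[symmetric]] refl])
  define k where "k z = rho Q (fst z) (snd z) / W Q (snd z)" for z
  have km[measurable]: "k \<in> borel_measurable (P \<Otimes>\<^sub>M Q')" unfolding k_def by measurable
  have PQ'd: "P \<Otimes>\<^sub>M Q' = density (P \<Otimes>\<^sub>M Q) (\<lambda>z. W Q (snd z))"
  proof -
    have "density P (\<lambda>_. 1) \<Otimes>\<^sub>M density Q (W Q) = density (P \<Otimes>\<^sub>M Q) (\<lambda>(x, y). 1 * W Q y)"
      by (rule pair_measure_density) (use Q'd Q'p.sigma_finite_measure_axioms in \<open>auto simp: Q.sigma_finite_measure_axioms\<close>)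
    then show ?thesis unfolding Q'd by (simp add: density_1 case_prod_beta')
  qed
  have Jd: "J = density (P \<Otimes>\<^sub>M Q') k"
  proof -
    have kmPQ: "k \<in> borel_measurable (P \<Otimes>\<^sub>M Q)"
      using km by (simp add: measurable_cong_sets[OF sPQ[unfolded sPQ'[symmetric]] refl])
    have "density (P \<Otimes>\<^sub>M Q') k = density (P \<Otimes>\<^sub>M Q) (\<lambda>z. W Q (snd z) * k z)"
      unfolding PQ'd by (rule density_density_eq) (use kmPQ in simp_all)
    also have "\<dots> = density (P \<Otimes>\<^sub>M Q) (\<lambda>z. rho Q (fst z) (snd z))"
    proof (rule density_cong)
      show "(\<lambda>z. W Q (snd z) * k z) \<in> borel_measurable (P \<Otimes>\<^sub>M Q)" using kmPQ by measurable
      show "(\<lambda>z. rho Q (fst z) (snd z)) \<in> borel_measurable (P \<Otimes>\<^sub>M Q)" by (rule rmPQ)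
      have "AE z in P \<Otimes>\<^sub>M Q. W Q (snd z) < \<infinity>"
        by (rule PQ.AE_pair_measure) (use W_fin[OF Q] in \<open>simp_all\<close>, measurable)
      then show "AE z in P \<Otimes>\<^sub>M Q. W Q (snd z) * k z = rho Q (fst z) (snd z)"
      proof (rule AE_mp, intro AE_I2 impI)
        fix z assume z: "z \<in> space (P \<Otimes>\<^sub>M Q)" and fin: "W Q (snd z) < \<infinity>"
        have "snd z \<in> space Q" using z by (simp add: space_pair_measure mem_Times_iff)
        then have "snd z \<in> space MY" using sets_eq_imp_space_eq[OF sQ] by simp
        then have "0 < W Q (snd z)" by (rule W_pos[OF Q])
        then show "W Q (snd z) * k z = rho Q (fst z) (snd z)" unfolding k_def by (rule W_div[OF _ fin])
      qed
    qed
    also have "\<dots> = J" unfolding J_def G_def by (rule JG_density[OF Q, symmetric])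
    finally show ?thesis by simp
  qed
  define lp :: "ennreal \<Rightarrow> ennreal" where "lp v = ennreal (ln (enn2real v))" for v
  define ln' :: "ennreal \<Rightarrow> ennreal" where "ln' v = ennreal (- ln (enn2real v))" for v
  define AI where "AI = (\<integral>\<^sup>+ z. lp (k z) \<partial>J)"
  define BI where "BI = (\<integral>\<^sup>+ z. ln' (k z) \<partial>J)"
  define Xp where "Xp = (\<integral>\<^sup>+ y. lp (W Q y) \<partial>Q')"
  define Xm where "Xm = (\<integral>\<^sup>+ y. ln' (W Q y) \<partial>Q')"
  define Ed where "Ed = (\<integral>\<^sup>+ z. ennreal (d (fst z) (snd z)) \<partial>J)"
  have rI: "mutual_info P MY G = enn2ereal AI - enn2ereal BI"
    unfolding mutual_info_def J_def[symmetric] Q'_def[symmetric] AI_def BI_def lp_def ln'_def Jd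
    by (rule rel_entropy_density[OF MP km])
  have BI1: "BI \<le> 1" unfolding BI_def ln'_def Jd by (rule neg_part_le1[OF MP km])
  have Xm1: "Xm \<le> 1" unfolding Xm_def ln'_def Q'd by (rule neg_part_le1[OF Q.prob_space_axioms WmQ])
  have XmXp: "Xm \<le> Xp" unfolding Xm_def Xp_def ln'_def lp_def Q'd
    by (rule rel_nonneg[OF Q.prob_space_axioms WmQ]) (use Q'd Q'p.prob_space_axioms in simp)
  have Ed: "exp_distortion P G d = enn2ereal Ed" unfolding Ed_def J_def by (rule J_d[OF K])
  have fstJ[measurable]: "fst \<in> J \<rightarrow>\<^sub>M P" by (simp add: measurable_cong_sets[OF sJ refl])
  have sndJ[measurable]: "snd \<in> J \<rightarrow>\<^sub>M MY" by (simp add: measurable_cong_sets[OF sJ refl])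
  have Sm[measurable]: "blahut_sigma d lam Q \<in> borel_measurable P" by (rule sig_meas[OF Q])
  have dJ[measurable]: "(\<lambda>z. d (fst z) (snd z)) \<in> borel_measurable J"
    using dm by (simp add: measurable_cong_sets[OF sJ refl] case_prod_beta')
  have kmJ[measurable]: "k \<in> borel_measurable J" using km by (simp add: measurable_cong_sets[OF sJ[unfolded sPQ'[symmetric]] refl])
  define C where "C x = ennreal (- ln (blahut_sigma d lam Q x))" for x
  have aeQ': "AE y in Q'. 0 < enn2real (W Q y)"
  proof -
    have "AE y in Q. W Q y < \<infinity>" by (rule W_fin[OF Q])
    then have "AE y in Q'. W Q y < \<infinity>" unfolding Q'd by (subst AE_density) (auto elim: AE_mp)
    then show ?thesis using AE_space[of Q']
      by eventually_elim (use W_pos[OF Q] sets_eq_imp_space_eq[OF sQ'] in \<open>auto simp: enn2real_positive_iff less_top\<close>)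
  qed
  have aeJ: "AE z in J. 0 < enn2real (W Q (snd z))"
    unfolding J_def by (rule J_AE_snd[OF K]) (use aeQ'[unfolded Q'_def] in simp, measurable)
  have pw: "AE z in J. lp (k z) + ennreal (lam * d (fst z) (snd z)) + lp (W Q (snd z))
      = ln' (k z) + C (fst z) + ln' (W Q (snd z))"
    using aeJ AE_space[of J]
  proof eventually_elim
    case (elim z)
    have zJ: "z \<in> space (P \<Otimes>\<^sub>M MY)" using elim(2) sets_eq_imp_space_eq[OF sJ] by simp
    have zs: "fst z \<in> space P" using zJ unfolding space_pair_measure by auto
    define w where "w = enn2real (W Q (snd z))"
    define S where "S = blahut_sigma d lam Q (fst z)"
    define L where "L = lam * d (fst z) (snd z)"
    have w: "0 < w" unfolding w_def by (rule elim(1))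
    have S: "0 < S" "S \<le> 1" using sig_props[OF Q zs] by (auto simp: S_def)
    have L: "0 \<le> L" using lam dnn by (simp add: L_def)
    define c where "c = - ln S"
    have c0: "0 \<le> c" using S by (simp add: c_def)
    have r: "enn2real (rho Q (fst z) (snd z)) = exp (- L) / S"
      using S by (simp add: rho_def S_def L_def)
    have rp: "0 < enn2real (rho Q (fst z) (snd z))" using S unfolding r by simp
    have kz: "enn2real (k z) = exp (- L) / S / w"
      unfolding k_def by (subst enn2real_div[OF rp elim(1)]) (simp add: r w_def)
    have lnk: "ln (enn2real (k z)) = - L + c - ln w"
      unfolding kz using S w by (simp add: c_def ln_div ln_mult)
    have m1: "max x 0 - max (- x) 0 = x" for x :: real by (simp add: max_def)
    have mm: "max c 0 = c" "max L 0 = L" using c0 L by auto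
    have "max (ln (enn2real (k z))) 0 + max L 0 + max (ln w) 0 \<le> max (- ln (enn2real (k z))) 0 + max c 0 + max (- ln w) 0"
      "max (- ln (enn2real (k z))) 0 + max c 0 + max (- ln w) 0 \<le> max (ln (enn2real (k z))) 0 + max L 0 + max (ln w) 0"
      using m1[of "ln (enn2real (k z))"] m1[of "ln w"] lnk mm by linarith+
    then have "ennreal (ln (enn2real (k z))) + ennreal L + ennreal (ln w) = ennreal (- ln (enn2real (k z))) + ennreal c + ennreal (- ln w)"
      using ennreal_sum3_le[of "ln (enn2real (k z))" L "ln w" "- ln (enn2real (k z))" c "- ln w"]
        ennreal_sum3_le[of "- ln (enn2real (k z))" c "- ln w" "ln (enn2real (k z))" L "ln w"]
      by (intro antisym) blast+
    then show ?case
      unfolding lp_def ln'_def C_def by (simp only: w_def S_def L_def c_def)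
  qed
  have "AI + ennreal lam * Ed + Xp = (\<integral>\<^sup>+ z. lp (k z) + ennreal (lam * d (fst z) (snd z)) + lp (W Q (snd z)) \<partial>J)"
  proof -
    have "(\<integral>\<^sup>+ z. lp (k z) + ennreal (lam * d (fst z) (snd z)) + lp (W Q (snd z)) \<partial>J)
      = (\<integral>\<^sup>+ z. lp (k z) \<partial>J) + (\<integral>\<^sup>+ z. ennreal lam * ennreal (d (fst z) (snd z)) \<partial>J) + (\<integral>\<^sup>+ z. lp (W Q (snd z)) \<partial>J)"
      unfolding lp_def using lam dnn by (simp only: ennreal_mult) (rule nn_integral_add3; measurable)
    also have "(\<integral>\<^sup>+ z. ennreal lam * ennreal (d (fst z) (snd z)) \<partial>J) = ennreal lam * Ed"
      unfolding Ed_def by (rule nn_integral_cmult) measurable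
    also have "(\<integral>\<^sup>+ z. lp (W Q (snd z)) \<partial>J) = Xp"
      unfolding J_def Xp_def Q'_def by (rule J_snd[OF K]) (unfold lp_def, measurable)
    finally show ?thesis unfolding AI_def by simp
  qed
  also have "\<dots> = (\<integral>\<^sup>+ z. ln' (k z) + C (fst z) + ln' (W Q (snd z)) \<partial>J)"
    by (rule nn_integral_cong_AE[OF pw])
  also have "\<dots> = BI + Phi Q + Xm"
  proof -
    have "(\<integral>\<^sup>+ z. ln' (k z) + C (fst z) + ln' (W Q (snd z)) \<partial>J)
      = (\<integral>\<^sup>+ z. ln' (k z) \<partial>J) + (\<integral>\<^sup>+ z. C (fst z) \<partial>J) + (\<integral>\<^sup>+ z. ln' (W Q (snd z)) \<partial>J)"
      unfolding ln'_def C_def by (rule nn_integral_add3; measurable)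
    also have "(\<integral>\<^sup>+ z. C (fst z) \<partial>J) = Phi Q"
      unfolding J_def Phi_def C_def by (rule J_fst[OF K]) measurable
    also have "(\<integral>\<^sup>+ z. ln' (W Q (snd z)) \<partial>J) = Xm"
      unfolding J_def Xm_def Q'_def by (rule J_snd[OF K]) (unfold ln'_def, measurable)
    finally show ?thesis unfolding BI_def by simp
  qed
  finally have eq: "AI + ennreal lam * Ed + Xp = BI + Phi Q + Xm" .
  have "(enn2ereal AI - enn2ereal BI) + enn2ereal (ennreal lam * Ed) \<le> enn2ereal (Phi Q)"
    by (rule ereal_aux5[OF _ _ XmXp eq]) (use BI1 Xm1 in \<open>auto simp: top_unique\<close>)
  moreover have "ereal lam * exp_distortion P G d = enn2ereal (ennreal lam * Ed)"
    using lam by (simp add: Ed times_ennreal.rep_eq enn2ereal_ennreal)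
  ultimately show ?thesis using rI unfolding G_def[symmetric] by simp
qed

end

lemma seq_bound:
  fixes phi delta :: "nat \<Rightarrow> real" and f :: real
  assumes key: "\<And>j. phi j + delta (Suc j) \<le> f + delta j"
    and low: "\<And>j. f \<le> phi j" and mono: "\<And>j. phi (Suc j) \<le> phi j" and pos: "\<And>j. 0 \<le> delta j"
  shows "\<And>k. k \<ge> 1 \<Longrightarrow> phi (k - 1) \<le> f + delta 0 / real k" and "phi \<longlonglongrightarrow> f"
proof -
  have sum: "(\<Sum>j<k. phi j - f) \<le> delta 0 - delta k" for k
  proof (induction k)
    case (Suc k)
    then show ?case using key[of k] by simp
  qed simp
  have dec: "decseq phi" by (rule decseq_SucI) (rule mono)
  show bound: "phi (k - 1) \<le> f + delta 0 / real k" if k: "k \<ge> 1" for k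
  proof -
    have "real k * (phi (k - 1) - f) = (\<Sum>j<k. phi (k - 1) - f)" by simp
    also have "\<dots> \<le> (\<Sum>j<k. phi j - f)"
    proof (rule sum_mono)
      fix j assume "j \<in> {..<k}"
      then have "j \<le> k - 1" by auto
      then show "phi (k - 1) - f \<le> phi j - f" using decseqD[OF dec] by simp
    qed
    also have "\<dots> \<le> delta 0" using sum[of k] pos[of k] by simp
    finally have "real k * (phi (k - 1) - f) \<le> delta 0" .
    then have "phi (k - 1) - f \<le> delta 0 / real k" using k by (simp add: pos_le_divide_eq mult.commute)
    then show ?thesis by simp
  qed
  have up: "phi k \<le> f + delta 0 * inverse (real (Suc k))" for k
    using bound[of "Suc k"] by (simp add: divide_inverse)
  have lim: "(\<lambda>k. f + delta 0 * inverse (real (Suc k))) \<longlonglongrightarrow> f"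
    using tendsto_add[OF tendsto_const tendsto_mult_right_zero[OF LIMSEQ_inverse_real_of_nat, of "delta 0"], of f]
    by simp
  show "phi \<longlonglongrightarrow> f"
    by (rule tendsto_sandwich[OF _ _ tendsto_const lim]) (use low up in auto)
qed

lemma rel_self:
  assumes M: "prob_space M"
  shows "rel_entropy M M = 0"
proof -
  have "rel_entropy (density M (\<lambda>_. 1)) M = 0"
    by (subst rel_entropy_density[OF M]) auto
  then show ?thesis by (simp add: density_1)
qed

context bl
begin

lemma main:
  assumes K: "Kstar \<in> P \<rightarrow>\<^sub>M prob_algebra MY"
    and opt: "mutual_info P MY Kstar + ereal lam * exp_distortion P Kstar d = rd_F P MY d lam"
    and Q0: "Q0 \<in> space (prob_algebra MY)"
    and D0: "rel_entropy (output_law P Kstar) Q0 < \<infinity>"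
  shows "(\<forall>k\<ge>1. blahut_F P MY d lam Q0 (Suc k) \<le> blahut_F P MY d lam Q0 k)
    \<and> ((\<lambda>k. blahut_F P MY d lam Q0 (Suc k)) \<longlonglongrightarrow> rd_F P MY d lam)
    \<and> (\<forall>k\<ge>1. blahut_F P MY d lam Q0 k
              \<le> rd_F P MY d lam + rel_entropy (output_law P Kstar) Q0 / ereal (real k))"
proof -
  define Qj where "Qj j = blahut_out P d lam Q0 j" for j
  have Qin: "Qj j \<in> space (prob_algebra MY)" for j unfolding Qj_def by (rule Qj_in[OF Q0])
  have QSuc: "Qj (Suc j) = bind P (blahut_kernel d lam (Qj j))" for j unfolding Qj_def by simp
  define Ph where "Ph j = enn2ereal (Phi (Qj j))" for j
  define Ps where "Ps = output_law P Kstar"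
  have Psin: "Ps \<in> space (prob_algebra MY)" unfolding Ps_def by (rule PK_in[OF K])
  define D where "D j = rel_entropy Ps (Qj j)" for j
  define F where "F = rd_F P MY d lam"
  have BFj: "blahut_F P MY d lam Q0 (Suc j) = Ph j" for j
    unfolding Ph_def Qj_def by (rule BF_j[OF Q0])
  have Dpos: "0 \<le> D j" for j
    unfolding D_def using rel_ge0[OF prob_algebra_prob[OF Qin[of j]] prob_algebra_prob[OF Psin]]
      prob_algebra_sets[OF Qin[of j]] prob_algebra_sets[OF Psin] by simp
  have Phpos: "0 \<le> Ph j" for j unfolding Ph_def by simp
  have key: "Ph j + D (Suc j) \<le> F + D j" for j
    using G5[OF Qin[of j] K] unfolding Ph_def D_def QSuc[symmetric] Ps_def[symmetric] F_def opt[symmetric]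
    by simp
  have GI: "mutual_info P MY (blahut_kernel d lam (Qj j)) + ereal lam * exp_distortion P (blahut_kernel d lam (Qj j)) d \<le> Ph j" for j
    unfolding Ph_def by (rule G4[OF Qin])
  have low: "F \<le> Ph j" for j
  proof -
    have "F \<le> mutual_info P MY (blahut_kernel d lam (Qj j)) + ereal lam * exp_distortion P (blahut_kernel d lam (Qj j)) d"
      unfolding F_def rd_F_def by (rule INF_lower[OF kernel_meas[OF Qin]])
    then show ?thesis using GI[of j] by simp
  qed
  have mono: "Ph (Suc j) \<le> Ph j" for j
  proof -
    have o: "output_law P (blahut_kernel d lam (Qj j)) = Qj (Suc j)" unfolding output_law_def QSuc ..
    have r0: "rel_entropy (Qj (Suc j)) (Qj (Suc j)) = 0" by (rule rel_self[OF prob_algebra_prob[OF Qin]])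
    have rpos: "0 \<le> rel_entropy (Qj (Suc j)) (Qj (Suc (Suc j)))"
      using rel_ge0[OF prob_algebra_prob[OF Qin[of "Suc (Suc j)"]] prob_algebra_prob[OF Qin[of "Suc j"]]]
        prob_algebra_sets[OF Qin[of "Suc (Suc j)"]] prob_algebra_sets[OF Qin[of "Suc j"]] by simp
    have "Ph (Suc j) \<le> Ph (Suc j) + rel_entropy (Qj (Suc j)) (Qj (Suc (Suc j)))"
      using rpos by (simp add: add_increasing2)
    also have "\<dots> \<le> mutual_info P MY (blahut_kernel d lam (Qj j)) + ereal lam * exp_distortion P (blahut_kernel d lam (Qj j)) d + 0"
      using G5[OF Qin[of "Suc j"] kernel_meas[OF Qin[of j]]] unfolding o Ph_def QSuc[symmetric] r0 .
    also have "\<dots> \<le> Ph j" using GI[of j] by simp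
    finally show ?thesis .
  qed
  have D0': "D 0 < \<infinity>" using D0 unfolding D_def Ps_def Qj_def by simp
  have c1: "\<forall>k\<ge>1. blahut_F P MY d lam Q0 (Suc k) \<le> blahut_F P MY d lam Q0 k"
  proof (intro allI impI)
    fix k :: nat assume "1 \<le> k"
    then obtain j where "k = Suc j" by (cases k) auto
    then show "blahut_F P MY d lam Q0 (Suc k) \<le> blahut_F P MY d lam Q0 k" using mono[of j] by (simp add: BFj)
  qed
  show ?thesis
  proof (cases "F = \<infinity>")
    case True
    have Phinf: "Ph j = \<infinity>" for j using low[of j] True by simp
    have c3: "\<forall>k\<ge>1. blahut_F P MY d lam Q0 k \<le> rd_F P MY d lam + rel_entropy (output_law P Kstar) Q0 / ereal (real k)"
    proof (intro allI impI)
      fix k :: nat assume k: "1 \<le> k"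
      obtain x where x: "rel_entropy (output_law P Kstar) Q0 = ereal x"
        using D0' Dpos[of 0] unfolding D_def Ps_def Qj_def by (cases "rel_entropy (output_law P Kstar) Q0") auto
      have "rel_entropy (output_law P Kstar) Q0 / ereal (real k) = ereal (x / real k)" using k x by simp
      then show "blahut_F P MY d lam Q0 k \<le> rd_F P MY d lam + rel_entropy (output_law P Kstar) Q0 / ereal (real k)"
        using True unfolding F_def by simp
    qed
    show ?thesis using c1 c3 True unfolding F_def by (simp add: BFj Phinf)
  next
    case False
    have Fm: "F \<noteq> - \<infinity>"
    proof
      assume "F = - \<infinity>"
      then have "F + D 0 = - \<infinity>" using D0' Dpos[of 0] by (cases "D 0") auto
      moreover have "Ph 0 + D (Suc 0) \<le> F + D 0" by (rule key)
      ultimately have "Ph 0 + D (Suc 0) \<le> - \<infinity>" by (simp only:)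
      moreover have "0 \<le> Ph 0 + D (Suc 0)" using Phpos[of 0] Dpos[of "Suc 0"] by (rule add_nonneg_nonneg)
      ultimately have "(0::ereal) \<le> - \<infinity>" by (rule order_trans[rotated])
      then show False by simp
    qed
    define f where "f = real_of_ereal F"
    have Ff: "F = ereal f" using False Fm unfolding f_def by (cases F) auto
    have Dfin: "D j \<noteq> \<infinity>" for j
    proof (induction j)
      case 0
      then show ?case using D0' by simp
    next
      case (Suc j)
      have "F + D j \<noteq> \<infinity>" using Suc Ff Dpos[of j] by (cases "D j") auto
      then have "Ph j + D (Suc j) \<noteq> \<infinity>" using key[of j] by (auto simp: top_unique)
      then show ?case using Phpos[of j] by auto
    qed
    have Phfin: "Ph j \<noteq> \<infinity>" for j
    proof -
      have "F + D j \<noteq> \<infinity>" using Dfin[of j] Ff Dpos[of j] by (cases "D j") auto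
      then have "Ph j + D (Suc j) \<noteq> \<infinity>" using key[of j] by (auto simp: top_unique)
      then show ?thesis using Dpos[of "Suc j"] by auto
    qed
    define phi where "phi j = real_of_ereal (Ph j)" for j
    define delta where "delta j = real_of_ereal (D j)" for j
    have Phe: "Ph j = ereal (phi j)" for j
      using Phfin[of j] Phpos[of j] unfolding phi_def by (cases "Ph j") auto
    have De: "D j = ereal (delta j)" for j
      using Dfin[of j] Dpos[of j] unfolding delta_def by (cases "D j") auto
    have key': "phi j + delta (Suc j) \<le> f + delta j" for j using key[of j] unfolding Phe De Ff by simp
    have low': "f \<le> phi j" for j using low[of j] unfolding Phe Ff by simp
    have mono': "phi (Suc j) \<le> phi j" for j using mono[of j] unfolding Phe by simp
    have pos': "0 \<le> delta j" for j using Dpos[of j] unfolding De by simp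
    note sb = seq_bound[of phi delta f, OF key' low' mono' pos']
    have c3: "\<forall>k\<ge>1. blahut_F P MY d lam Q0 k \<le> rd_F P MY d lam + rel_entropy (output_law P Kstar) Q0 / ereal (real k)"
    proof (intro allI impI)
      fix k :: nat assume k: "1 \<le> k"
      then obtain j where kj: "k = Suc j" by (cases k) auto
      have r: "rel_entropy (output_law P Kstar) Q0 = ereal (delta 0)"
        using De[of 0] unfolding D_def Ps_def Qj_def by simp
      have "blahut_F P MY d lam Q0 k = ereal (phi (k - 1))" using BFj[of j] Phe[of j] kj by simp
      also have "\<dots> \<le> ereal (f + delta 0 / real k)" using sb(1)[OF k] by simp
      also have "\<dots> = rd_F P MY d lam + rel_entropy (output_law P Kstar) Q0 / ereal (real k)"
        unfolding r F_def[symmetric] Ff using k by simp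
      finally show "blahut_F P MY d lam Q0 k \<le> rd_F P MY d lam + rel_entropy (output_law P Kstar) Q0 / ereal (real k)" .
    qed
    have c2: "(\<lambda>k. blahut_F P MY d lam Q0 (Suc k)) \<longlonglongrightarrow> rd_F P MY d lam"
      unfolding BFj Phe F_def[symmetric] Ff by (rule tendsto_ereal[OF sb(2)])
    show ?thesis using c1 c2 c3 by blast
  qed
qed

end

theorem theorem6:
  fixes P :: "'a measure" and MY :: "'b measure"
    and d :: "'a \<Rightarrow> 'b \<Rightarrow> real" and lam :: real
    and Kstar :: "'a \<Rightarrow> 'b measure" and Q0 :: "'b measure"
  assumes "prob_space P"
    and "\<forall>x\<in>space P. {x} \<in> sets P"
    and "\<forall>y\<in>space MY. {y} \<in> sets MY"
    and "(\<lambda>(x, y). d x y) \<in> borel_measurable (P \<Otimes>\<^sub>M MY)"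
    and "\<forall>x y. 0 \<le> d x y"
    and "lam > 0"
    and "Kstar \<in> P \<rightarrow>\<^sub>M prob_algebra MY"
    and "mutual_info P MY Kstar + ereal lam * exp_distortion P Kstar d = rd_F P MY d lam"
    and "Q0 \<in> space (prob_algebra MY)"
    and "rel_entropy (output_law P Kstar) Q0 < \<infinity>"
  shows "(\<forall>k\<ge>1. blahut_F P MY d lam Q0 (Suc k) \<le> blahut_F P MY d lam Q0 k)
    \<and> ((\<lambda>k. blahut_F P MY d lam Q0 (Suc k)) \<longlonglongrightarrow> rd_F P MY d lam)
    \<and> (\<forall>k\<ge>1. blahut_F P MY d lam Q0 k
              \<le> rd_F P MY d lam + rel_entropy (output_law P Kstar) Q0 / ereal (real k))"
  proof -
  have I: "bl P MY d lam"
    by (rule bl.intro) (fact assms(1), fact assms(4), fact assms(5), fact assms(6))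
  show ?thesis by (rule bl.main[OF I assms(7) assms(8) assms(9) assms(10)])
qed

end
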